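(* Let $\alpha>0$, $\beta\geq0$, $q\in(0,\pi/2)$, and $m\geq 0$, and let $\{(u_n,v_n)\}\subset\mathcal{X}^0_{q,m}$ satisfy $E(u_n,v_n)\to E_{\min}(q,m)$ as $n\to\infty$. Write $u_n=\rho_ne^{i\theta_n}$. Then there exists $\delta>0$, independent of $n$, such that $\|\rho_n'\|_2>\delta$ for all sufficiently large $n$. In addition, if $m>0$, then $\|v_n\|_4>\delta$ for all sufficiently large $n$.
   Context: $\|\cdot\|_r$ denotes the $L^r(\mathbb{R})$ norm. $\mathcal{E}(\mathbb{R})=\{u\in H^1_{\mathrm{loc}}(\mathbb{R};\mathbb{C}): u'\in L^2,\ 1-|u|^2\in L^2(\mathbb{R})\}$, $\mathcal{NE}(\mathbb{R})=\{u\in\mathcal{E}(\mathbb{R}):|u|>0\}$; each $u\in\mathcal{NE}(\mathbb{R})$ has a lifting $u=\rho e^{i\theta}$, $\rho=|u|$, $\theta\in H^1_{\mathrm{loc}}$ real, $\theta'\in L^2$. Let $G(s)=s(2-s)$, $p(u)=\frac12\int_{\mathbb{R}}G(|1-\rho|)\theta'\,dx$. Let $\mathcal{X}=\{(u,v)\in\mathcal{NE}(\mathbb{R})\times H^1(\mathbb{R}):|u|<2\}$ ($v$ real-valued), $\mathcal{X}_{q,m}=\{(u,v)\in\mathcal{X}:p(u)=q,\ \|v\|_{2}^2=m\}$, and $\mathcal{X}^0_{q,m}$ the set of $(\rho e^{i\theta},v)\in\mathcal{X}_{q,m}$ such that $1-\rho$, $\theta'$ and $v$ are even, nonnegative, radially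 nonincreasing functions in $C_0^\infty(\mathbb{R})$. The energy is $E(u,v)=\int_{\mathbb{R}}\big(\tfrac12|u'|^2+\tfrac12(v')^2+\tfrac14(1-|u|^2)^2+\tfrac{\beta}{4}v^4-\tfrac{\alpha}{2}(1-|u|^2)v^2\big)dx$ and $E_{\min}(q,m)=\inf\{E(u,v):(u,v)\in\mathcal{X}_{q,m}\}$. *)

theory Defs
  imports "HOL-Analysis.Analysis"
begin

definition L2 :: "(real \<Rightarrow> 'a::{banach,second_countable_topology}) \<Rightarrow> bool" where
  "L2 f \<longleftrightarrow> f \<in> borel_measurable lborel \<and> integrable lborel (\<lambda>x. (norm (f x))^2)"

definition L2norm :: "(real \<Rightarrow> 'a::{banach,second_countable_topology}) \<Rightarrow> real" where
  "L2norm f = sqrt (LINT x|lborel. (norm (f x))^2)"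

definition L4norm :: "(real \<Rightarrow> real) \<Rightarrow> real" where
  "L4norm f = (LINT x|lborel. (f x)^4) powr (1/4)"

(* w is the weak derivative of u in H^1_loc(R): w is locally integrable and u is its
   (absolutely continuous representative) primitive *)
definition has_weak_deriv :: "(real \<Rightarrow> 'a::{banach,second_countable_topology}) \<Rightarrow> (real \<Rightarrow> 'a) \<Rightarrow> bool" where
  "has_weak_deriv u w \<longleftrightarrow>
     (\<forall>a b. set_integrable lborel {a..b} w) \<and>
     (\<forall>a b. a \<le> b \<longrightarrow> u b - u a = (LINT x:{a..b}|lborel. w x))"

definition H1loc :: "(real \<Rightarrow> 'a::{banach,second_countable_topology}) \<Rightarrow> bool" where
  "H1loc u \<longleftrightarrow> (\<exists>w. has_weak_deriv u w)"

(* a chosen weak derivative (unique a.e.) *)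
definition wderiv :: "(real \<Rightarrow> 'a::{banach,second_countable_topology}) \<Rightarrow> real \<Rightarrow> 'a" where
  "wderiv u = (SOME w. has_weak_deriv u w)"

definition H1 :: "(real \<Rightarrow> real) \<Rightarrow> bool" where
  "H1 v \<longleftrightarrow> L2 v \<and> (\<exists>w. has_weak_deriv v w \<and> L2 w)"

definition Espace :: "(real \<Rightarrow> complex) set" where
  "Espace = {u. \<exists>w. has_weak_deriv u w \<and> L2 w \<and> L2 (\<lambda>x. 1 - (cmod (u x))^2)}"

definition NEspace :: "(real \<Rightarrow> complex) set" where
  "NEspace = {u \<in> Espace. \<forall>x. u x \<noteq> 0}"

definition lifting :: "(real \<Rightarrow> complex) \<Rightarrow> (real \<Rightarrow> real) \<Rightarrow> bool" where
  "lifting u \<theta> \<longleftrightarrow> (\<forall>x. u x = complex_of_real (cmod (u x)) * cis (\<theta> x)) \<and>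
     (\<exists>w. has_weak_deriv \<theta> w \<and> L2 w)"

definition G :: "real \<Rightarrow> real" where
  "G s = s * (2 - s)"

definition momentum :: "(real \<Rightarrow> complex) \<Rightarrow> real" where
  "momentum u = (let \<theta> = (SOME \<theta>. lifting u \<theta>) in
     (1/2) * (LINT x|lborel. G \<bar>1 - cmod (u x)\<bar> * wderiv \<theta> x))"

definition Xspace :: "((real \<Rightarrow> complex) \<times> (real \<Rightarrow> real)) set" where
  "Xspace = {(u, v). u \<in> NEspace \<and> H1 v \<and> (\<forall>x. cmod (u x) < 2)}"

definition Xqm :: "real \<Rightarrow> real \<Rightarrow> ((real \<Rightarrow> complex) \<times> (real \<Rightarrow> real)) set" where
  "Xqm q m = {(u, v) \<in> Xspace. momentum u = q \<and> (L2norm v)^2 = m}"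

definition smooth_fun :: "(real \<Rightarrow> real) \<Rightarrow> bool" where
  "smooth_fun f \<longleftrightarrow> (\<forall>k x. ((deriv ^^ k) f) differentiable (at x))"

definition C0inf :: "(real \<Rightarrow> real) \<Rightarrow> bool" where
  "C0inf f \<longleftrightarrow> smooth_fun f \<and> (\<exists>R. \<forall>x. \<bar>x\<bar> > R \<longrightarrow> f x = 0)"

definition sym_dec :: "(real \<Rightarrow> real) \<Rightarrow> bool" where
  "sym_dec f \<longleftrightarrow> (\<forall>x. f (-x) = f x) \<and> (\<forall>x. 0 \<le> f x) \<and>
     (\<forall>x y. 0 \<le> x \<longrightarrow> x \<le> y \<longrightarrow> f y \<le> f x)"

definition X0qm :: "real \<Rightarrow> real \<Rightarrow> ((real \<Rightarrow> complex) \<times> (real \<Rightarrow> real)) set" where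
  "X0qm q m = {(u, v) \<in> Xqm q m.
     \<exists>\<theta> \<theta>'. (\<forall>x. u x = complex_of_real (cmod (u x)) * cis (\<theta> x)) \<and>
            (\<forall>x. (\<theta> has_real_derivative \<theta>' x) (at x)) \<and>
            C0inf (\<lambda>x. 1 - cmod (u x)) \<and> sym_dec (\<lambda>x. 1 - cmod (u x)) \<and>
            C0inf \<theta>' \<and> sym_dec \<theta>' \<and> C0inf v \<and> sym_dec v}"

definition energy :: "real \<Rightarrow> real \<Rightarrow> (real \<Rightarrow> complex) \<Rightarrow> (real \<Rightarrow> real) \<Rightarrow> real" where
  "energy \<alpha> \<beta> u v = (LINT x|lborel.
      (1/2) * (cmod (wderiv u x))^2 + (1/2) * (wderiv v x)^2
      + (1/4) * (1 - (cmod (u x))^2)^2 + (\<beta>/4) * (v x)^4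
      - (\<alpha>/2) * (1 - (cmod (u x))^2) * (v x)^2)"

definition Emin :: "real \<Rightarrow> real \<Rightarrow> real \<Rightarrow> real \<Rightarrow> ereal" where
  "Emin \<alpha> \<beta> q m = (INF uv \<in> Xqm q m. ereal (energy \<alpha> \<beta> (fst uv) (snd uv)))"

end

theory Submission
  imports Defs
begin

lemma set_lint_empty[simp]: "(LINT x:{}|M. f x) = 0"
  by (simp add: set_lebesgue_integral_def)

lemma AE_zero_of_intervals:
  fixes h :: "real \<Rightarrow> real"
  assumes int: "\<And>a b. set_integrable lborel {a..b} h"
    and z: "\<And>a b. a \<le> b \<Longrightarrow> (LINT x:{a..b}|lborel. h x) = 0"
  shows "AE x in lborel. h x = 0"
proof -
  have N: "AE x in lborel. indicator {-real N..real N} x * h x = 0" for N :: nat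
  proof -
    define g where "g = (\<lambda>x. indicator {-real N..real N} x * h x)"
    have gi: "integrable lborel g"
      using int[of "-real N" "real N"] unfolding g_def set_integrable_def by simp
    have zI: "(LINT x:{a..b}|lborel. g x) = 0" if "a \<le> b" for a b
    proof -
      have "(LINT x:{a..b}|lborel. g x) = (LINT x:{max a (-real N)..min b (real N)}|lborel. h x)"
        unfolding set_lebesgue_integral_def g_def
        by (intro Bochner_Integration.integral_cong) (auto split: split_indicator)
      also have "\<dots> = 0"
      proof (cases "max a (-real N) \<le> min b (real N)")
        case True then show ?thesis using z by blast
      next
        case False then have "{max a (-real N)..min b (real N)} = {}" by auto
        then show ?thesis by (simp add: set_lebesgue_integral_def)
      qed
      finally show ?thesis .
    qed
    have gA: "(LINT x:A|lborel. g x) = 0" if "A \<in> sets borel" for A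
      using that
    proof (induction rule: borel_set_induct)
      case empty then show ?case by simp
    next
      case (interval a b) then show ?case using zI by simp
    next
      case (compl A)
      have ia: "integrable lborel (\<lambda>x. indicator A x * g x)"
        using gi compl.hyps integrable_mult_indicator[of A lborel g] by simp
      have "(LINT x:(-A)|lborel. g x) = (LINT x|lborel. g x - indicator A x * g x)"
        unfolding set_lebesgue_integral_def
        by (intro Bochner_Integration.integral_cong) (auto split: split_indicator)
      also have "\<dots> = (LINT x|lborel. g x) - (LINT x:A|lborel. g x)"
        unfolding set_lebesgue_integral_def using gi ia by simp
      also have "(LINT x|lborel. g x) = (LINT x:{-real N..real N}|lborel. g x)"
        unfolding set_lebesgue_integral_def g_def
        by (intro Bochner_Integration.integral_cong) (auto split: split_indicator)
      finally show ?case using zI compl.IH by simp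
    next
      case (union f)
      have "(LINT x:(\<Union>i. f i)|lborel. g x) = (\<Sum>i. (LINT x:(f i)|lborel. g x))"
        apply (rule lebesgue_integral_countable_add)
        using union gi integrable_mult_indicator[of "\<Union>i. f i" lborel g]
        by (auto simp: disjoint_family_on_def set_integrable_def)
      then show ?case using union.IH by simp
    qed
    have "AE x in lborel. g x = 0"
      by (rule sigma_finite_measure.density_zero[OF sigma_finite_lborel gi]) (use gA in auto)
    then show ?thesis unfolding g_def .
  qed
  then have "AE x in lborel. \<forall>N::nat. indicator {-real N..real N} x * h x = 0"
    using N by (subst AE_all_countable) blast
  then show ?thesis
  proof (rule eventually_mono)
    fix x assume H: "\<forall>N::nat. indicator {-real N..real N} x * h x = (0::real)"
    obtain N :: nat where "\<bar>x\<bar> \<le> real N" using real_arch_simple by blast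
    with H[rule_format, of N] show "h x = 0" by (auto simp: indicator_def abs_le_iff split: if_splits)
  qed
qed


lemma meas_locint:
  fixes w :: "real \<Rightarrow> 'a::{banach,second_countable_topology}"
  assumes "\<And>a b. set_integrable lborel {a..b} w"
  shows "w \<in> borel_measurable lborel"
proof (rule borel_measurable_LIMSEQ_metric)
  fix i :: nat
  show "(\<lambda>x. indicator {-real i..real i} x *\<^sub>R w x) \<in> borel_measurable lborel"
    using assms[of "-real i" "real i"] unfolding set_integrable_def by (rule borel_measurable_integrable)
next
  fix x :: real
  obtain N :: nat where N: "\<bar>x\<bar> \<le> real N" using real_arch_simple by blast
  have "eventually (\<lambda>i. indicator {-real i..real i} x *\<^sub>R w x = w x) sequentially"
    unfolding eventually_sequentially
    by (rule exI[of _ N]) (use N in \<open>auto simp: indicator_def abs_le_iff\<close>)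
  then show "(\<lambda>i. indicator {-real i..real i} x *\<^sub>R w x) \<longlonglongrightarrow> w x"
    by (rule tendsto_eventually)
qed

lemma weak_deriv_unique_real:
  fixes f w1 w2 :: "real \<Rightarrow> real"
  assumes "has_weak_deriv f w1" "has_weak_deriv f w2"
  shows "AE x in lborel. w1 x = w2 x"
proof -
  have "AE x in lborel. w1 x - w2 x = 0"
  proof (rule AE_zero_of_intervals)
    fix a b :: real
    show "set_integrable lborel {a..b} (\<lambda>x. w1 x - w2 x)"
      using assms unfolding has_weak_deriv_def by auto
    show "(LINT x:{a..b}|lborel. w1 x - w2 x) = 0" if "a \<le> b"
      using assms that unfolding has_weak_deriv_def by (simp add: set_integral_diff)
  qed
  then show ?thesis by simp
qed

lemma weak_deriv_unique_complex:
  fixes f w1 w2 :: "real \<Rightarrow> complex"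
  assumes "has_weak_deriv f w1" "has_weak_deriv f w2"
  shows "AE x in lborel. w1 x = w2 x"
proof -
  define h where "h = (\<lambda>x. w1 x - w2 x)"
  have si: "set_integrable lborel {a..b} h" for a b
    using assms unfolding has_weak_deriv_def h_def by auto
  have z: "(LINT x:{a..b}|lborel. h x) = 0" if "a \<le> b" for a b
    using assms that unfolding has_weak_deriv_def h_def by (simp add: set_integral_diff)
  have Re: "AE x in lborel. Re (h x) = 0"
  proof (rule AE_zero_of_intervals)
    fix a b :: real
    show "set_integrable lborel {a..b} (\<lambda>x. Re (h x))"
      using integrable_bounded_linear[OF bounded_linear_Re si[of a b, unfolded set_integrable_def]]
      unfolding set_integrable_def by simp
    show "(LINT x:{a..b}|lborel. Re (h x)) = 0" if "a \<le> b"
      using integral_bounded_linear[OF bounded_linear_Re si[of a b, unfolded set_integrable_def]] z[OF that]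
      unfolding set_lebesgue_integral_def by simp
  qed
  have Im: "AE x in lborel. Im (h x) = 0"
  proof (rule AE_zero_of_intervals)
    fix a b :: real
    show "set_integrable lborel {a..b} (\<lambda>x. Im (h x))"
      using integrable_bounded_linear[OF bounded_linear_Im si[of a b, unfolded set_integrable_def]]
      unfolding set_integrable_def by simp
    show "(LINT x:{a..b}|lborel. Im (h x)) = 0" if "a \<le> b"
      using integral_bounded_linear[OF bounded_linear_Im si[of a b, unfolded set_integrable_def]] z[OF that]
      unfolding set_lebesgue_integral_def by simp
  qed
  from Re Im show ?thesis
    by eventually_elim (simp add: h_def complex_eq_iff)
qed

lemma has_weak_deriv_C1:
  fixes f f' :: "real \<Rightarrow> 'a::euclidean_space"
  assumes d: "\<And>x. (f has_vector_derivative f' x) (at x)" and c: "continuous_on UNIV f'"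
  shows "has_weak_deriv f f'"
  unfolding has_weak_deriv_def
proof (intro conjI allI impI)
  fix a b :: real
  show "set_integrable lborel {a..b} f'"
    by (rule borel_integrable_atLeastAtMost') (rule continuous_on_subset[OF c], simp)
  assume "a \<le> b"
  show "f b - f a = (LINT x:{a..b}|lborel. f' x)"
    unfolding set_lebesgue_integral_def
    by (rule integral_FTC_atLeastAtMost[symmetric])
       (use \<open>a \<le> b\<close> d c in \<open>auto intro: has_vector_derivative_at_within continuous_on_subset\<close>)
qed

lemma int_ccs:
  fixes f :: "real \<Rightarrow> real"
  assumes c: "continuous_on UNIV f" and z: "\<And>x. R < \<bar>x\<bar> \<Longrightarrow> f x = 0"
  shows "integrable lborel f"
proof -
  have "integrable lborel (\<lambda>x. f x * indicator {-R..R} x)"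
    by (rule borel_integrable_atLeastAtMost) (use c in \<open>auto simp: continuous_on_eq_continuous_at\<close>)
  also have "(\<lambda>x. f x * indicator {-R..R} x) = f"
  proof
    fix x show "f x * indicator {-R..R} x = f x"
      using z[of x] by (cases "R < \<bar>x\<bar>") (auto simp: indicator_def abs_le_iff)
  qed
  finally show ?thesis .
qed

lemma meas_cont:
  fixes f :: "real \<Rightarrow> 'a::{banach,second_countable_topology}"
  assumes "continuous_on UNIV f"
  shows "f \<in> borel_measurable lborel"
  using assms by (simp add: borel_measurable_continuous_onI)


lemma weak_deriv_cont:
  fixes f w :: "real \<Rightarrow> real"
  assumes "has_weak_deriv f w"
  shows "continuous_on UNIV f"
proof -
  have "isCont f x0" for x0
  proof -
    define a where "a = x0 - 1"
    define b where "b = x0 + 1"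
    have si: "set_integrable lborel {a..b} w" using assms unfolding has_weak_deriv_def by auto
    have io: "w integrable_on {a..b}" using set_borel_integral_eq_integral(1)[OF si] .
    have "continuous_on {a..b} (\<lambda>y. f a + integral {a..y} w)"
      by (intro continuous_intros indefinite_integral_continuous_1 io)
    moreover have "f a + integral {a..y} w = f y" if "y \<in> {a..b}" for y
    proof -
      have "set_integrable lborel {a..y} w" using assms unfolding has_weak_deriv_def by auto
      then have "(LINT x:{a..y}|lborel. w x) = integral {a..y} w"
        by (rule set_borel_integral_eq_integral(2))
      moreover have "f y - f a = (LINT x:{a..y}|lborel. w x)"
        using assms that unfolding has_weak_deriv_def by auto
      ultimately show ?thesis by simp
    qed
    ultimately have "continuous_on {a..b} f"
      using continuous_on_eq by blast
    moreover have "x0 \<in> interior {a..b}" unfolding a_def b_def by simp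
    ultimately show ?thesis
      using continuous_on_interior by blast
  qed
  then show ?thesis by (simp add: continuous_at_imp_continuous_on)
qed

definition eint :: "real \<Rightarrow> real \<Rightarrow> real \<Rightarrow> real \<Rightarrow> real \<Rightarrow> real \<Rightarrow> real \<Rightarrow> real" where
  "eint \<alpha> \<beta> r r' t' w w' = (1/2) * (r'^2 + (r*t')^2) + (1/2) * w'^2 + (1/4) * (1 - r^2)^2
      + (\<beta>/4) * w^4 - (\<alpha>/2) * (1 - r^2) * w^2"

lemma L2_real_ccs:
  fixes f :: "real \<Rightarrow> real"
  assumes "continuous_on UNIV f" "\<And>x. R < \<bar>x\<bar> \<Longrightarrow> f x = 0"
  shows "L2 f"
  unfolding L2_def
proof
  show "f \<in> borel_measurable lborel" using assms(1) by (rule meas_cont)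
  show "integrable lborel (\<lambda>x. (norm (f x))\<^sup>2)"
    by (rule int_ccs[where R=R]) (use assms in \<open>auto intro!: continuous_intros\<close>)
qed


lemma cis_eq_imp_int:
  assumes "cis a = cis b"
  shows "\<exists>n::int. a = b + 2 * pi * n"
proof -
  from assms have "sin a = sin b \<and> cos a = cos b"
    by (metis cis.sel)
  then show ?thesis using sin_cos_eq_iff by blast
qed

lemma master:
  fixes \<rho> \<rho>' \<theta> \<theta>' v v' :: "real \<Rightarrow> real" and u :: "real \<Rightarrow> complex"
  assumes d\<rho>: "\<And>x. (\<rho> has_real_derivative \<rho>' x) (at x)"
    and d\<theta>: "\<And>x. (\<theta> has_real_derivative \<theta>' x) (at x)"
    and dv: "\<And>x. (v has_real_derivative v' x) (at x)"
    and c\<rho>': "continuous_on UNIV \<rho>'" and c\<theta>': "continuous_on UNIV \<theta>'" and cv': "continuous_on UNIV v'"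
    and pos: "\<And>x. 0 < \<rho> x" and lt2: "\<And>x. \<rho> x < 2"
    and supp: "\<And>x. R < \<bar>x\<bar> \<Longrightarrow> \<rho> x = 1 \<and> \<rho>' x = 0 \<and> \<theta>' x = 0 \<and> v x = 0 \<and> v' x = 0"
    and u: "u = (\<lambda>x. complex_of_real (\<rho> x) * cis (\<theta> x))"
  shows "(u, v) \<in> Xspace"
    and "momentum u = (1/2) * (LINT x|lborel. G \<bar>1 - \<rho> x\<bar> * \<theta>' x)"
    and "L2norm v ^ 2 = (LINT x|lborel. (v x)^2)"
    and "energy \<alpha> \<beta> u v = (LINT x|lborel. eint \<alpha> \<beta> (\<rho> x) (\<rho>' x) (\<theta>' x) (v x) (v' x))"
proof -
  have c\<rho>: "continuous_on UNIV \<rho>" using d\<rho> by (meson DERIV_continuous continuous_at_imp_continuous_on)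
  have c\<theta>: "continuous_on UNIV \<theta>" using d\<theta> by (meson DERIV_continuous continuous_at_imp_continuous_on)
  have cv: "continuous_on UNIV v" using dv by (meson DERIV_continuous continuous_at_imp_continuous_on)
  have cu: "\<And>x. cmod (u x) = \<rho> x"
    using pos by (simp add: u norm_mult less_imp_le)
  define u' where "u' = (\<lambda>x. (complex_of_real (\<rho>' x) + \<i> * complex_of_real (\<rho> x * \<theta>' x)) * cis (\<theta> x))"
  have du: "(u has_vector_derivative u' x) (at x)" for x
  proof -
    have a: "((\<lambda>x. complex_of_real (\<rho> x)) has_vector_derivative complex_of_real (\<rho>' x)) (at x)"
      using d\<rho>[of x] by (simp add: has_vector_derivative_of_real has_real_derivative_iff_has_vector_derivative)
    have b: "((\<lambda>x. cis (\<theta> x)) has_vector_derivative (\<theta>' x) *\<^sub>R (\<i> * cis (\<theta> x))) (at x)"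
      using has_derivative_cis[OF d\<theta>[of x, unfolded has_field_derivative_def]]
      unfolding has_vector_derivative_def by (simp add: mult.commute)
    have "(u has_vector_derivative
        complex_of_real (\<rho> x) * ((\<theta>' x) *\<^sub>R (\<i> * cis (\<theta> x))) + complex_of_real (\<rho>' x) * cis (\<theta> x)) (at x)"
      unfolding u by (rule has_vector_derivative_mult[OF a b])
    moreover have "complex_of_real (\<rho> x) * ((\<theta>' x) *\<^sub>R (\<i> * cis (\<theta> x))) + complex_of_real (\<rho>' x) * cis (\<theta> x) = u' x"
      unfolding u'_def by (simp add: scaleR_conv_of_real algebra_simps)
    ultimately show ?thesis by simp
  qed
  have cu': "continuous_on UNIV u'"
    unfolding u'_def using c\<rho> c\<rho>' c\<theta> c\<theta>' by (intro continuous_intros) auto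
  have nu': "(cmod (u' x))^2 = (\<rho>' x)^2 + (\<rho> x * \<theta>' x)^2" for x
    unfolding u'_def norm_mult by (simp add: cmod_power2)
  have wdu: "has_weak_deriv u u'" by (rule has_weak_deriv_C1[OF du cu'])
  have wdv: "has_weak_deriv v v'"
    by (rule has_weak_deriv_C1[OF _ cv']) (use dv in \<open>simp add: has_real_derivative_iff_has_vector_derivative\<close>)
  have wd\<theta>: "has_weak_deriv \<theta> \<theta>'"
    by (rule has_weak_deriv_C1[OF _ c\<theta>']) (use d\<theta> in \<open>simp add: has_real_derivative_iff_has_vector_derivative\<close>)
  have L2u': "L2 u'"
    unfolding L2_def
  proof
    show "u' \<in> borel_measurable lborel" by (rule meas_cont[OF cu'])
    show "integrable lborel (\<lambda>x. (norm (u' x))\<^sup>2)"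
      unfolding nu' by (rule int_ccs[where R=R]) (use supp c\<rho> c\<rho>' c\<theta>' in \<open>auto intro!: continuous_intros\<close>)
  qed
  have L2v: "L2 v" by (rule L2_real_ccs[where R=R]) (use cv supp in auto)
  have L2v': "L2 v'" by (rule L2_real_ccs[where R=R]) (use cv' supp in auto)
  have L2\<theta>': "L2 \<theta>'" by (rule L2_real_ccs[where R=R]) (use c\<theta>' supp in auto)
  have L2u2: "L2 (\<lambda>x. 1 - (cmod (u x))^2)"
    unfolding cu by (rule L2_real_ccs[where R=R]) (use c\<rho> supp in \<open>auto intro!: continuous_intros\<close>)
  show X: "(u, v) \<in> Xspace"
  proof -
    have nz: "\<forall>x. u x \<noteq> 0" using cu pos by (metis norm_zero less_irrefl)
    show ?thesis using wdu L2u' L2u2 L2v wdv L2v' cu lt2 nz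
      unfolding Xspace_def NEspace_def Espace_def H1_def by auto
  qed
  show "L2norm v ^ 2 = (LINT x|lborel. (v x)^2)"
  proof -
    have "0 \<le> (LINT x|lborel. (norm (v x))^2)" by simp
    then show ?thesis unfolding L2norm_def by simp
  qed
  show "momentum u = (1/2) * (LINT x|lborel. G \<bar>1 - \<rho> x\<bar> * \<theta>' x)"
  proof -
    define \<theta>0 where "\<theta>0 = (SOME \<theta>. lifting u \<theta>)"
    have "lifting u \<theta>"
      unfolding lifting_def using cu wd\<theta> L2\<theta>' by (auto simp: u)
    then have l0: "lifting u \<theta>0" unfolding \<theta>0_def by (rule someI[of "lifting u"])
    then obtain w0 where w0: "has_weak_deriv \<theta>0 w0" unfolding lifting_def by blast
    define w where "w = wderiv \<theta>0"
    have ww: "has_weak_deriv \<theta>0 w" unfolding w_def wderiv_def using w0 by (rule someI[of "has_weak_deriv \<theta>0"])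
    have c0: "continuous_on UNIV \<theta>0" by (rule weak_deriv_cont[OF ww])
    have ceq: "cis (\<theta>0 x) = cis (\<theta> x)" for x
    proof -
      have "complex_of_real (\<rho> x) * cis (\<theta>0 x) = complex_of_real (\<rho> x) * cis (\<theta> x)"
        using l0 cu unfolding lifting_def by (metis u)
      then show ?thesis using pos[of x] by simp
    qed
    define d where "d = (\<lambda>x. (\<theta>0 x - \<theta> x) / (2 * pi))"
    have dint: "d x \<in> \<int>" for x
    proof -
      obtain n :: int where "\<theta>0 x = \<theta> x + 2 * pi * n" using cis_eq_imp_int[OF ceq[of x]] by blast
      then have "d x = of_int n" unfolding d_def by (simp add: field_simps)
      then show ?thesis by simp
    qed
    have "d constant_on UNIV"
    proof (rule continuous_discrete_range_constant)
      show "continuous_on UNIV d" unfolding d_def using c0 c\<theta> by (intro continuous_intros) auto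
      fix x :: real
      show "\<exists>e>0. \<forall>y. y \<in> UNIV \<and> d y \<noteq> d x \<longrightarrow> e \<le> norm (d y - d x)"
      proof (intro exI[of _ 1] conjI allI impI)
        fix y assume "y \<in> UNIV \<and> d y \<noteq> d x"
        moreover obtain m where "d y = of_int m" using dint[of y] Ints_cases by blast
        moreover obtain n where "d x = of_int n" using dint[of x] Ints_cases by blast
        ultimately show "1 \<le> norm (d y - d x)" by (auto simp: of_int_diff[symmetric] simp del: of_int_diff)
      qed simp
    qed simp
    then obtain c where dc: "\<And>x. d x = c" unfolding constant_on_def by blast
    have th0: "\<theta>0 x = \<theta> x + 2 * pi * c" for x
      using dc[of x] unfolding d_def by (simp add: field_simps)
    have "has_weak_deriv \<theta> w"
      using ww unfolding has_weak_deriv_def by (simp add: th0)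
    then have ae: "AE x in lborel. w x = \<theta>' x"
      using wd\<theta> by (rule weak_deriv_unique_real)
    have mw: "w \<in> borel_measurable lborel"
      by (rule meas_locint) (use ww in \<open>auto simp: has_weak_deriv_def\<close>)
    have cG: "continuous_on UNIV (\<lambda>x. G \<bar>1 - \<rho> x\<bar>)"
      unfolding G_def using c\<rho> by (intro continuous_intros)
    have "(LINT x|lborel. G \<bar>1 - cmod (u x)\<bar> * w x) = (LINT x|lborel. G \<bar>1 - \<rho> x\<bar> * \<theta>' x)"
      unfolding cu
    proof (rule integral_cong_AE)
      show "(\<lambda>x. G \<bar>1 - \<rho> x\<bar> * w x) \<in> borel_measurable lborel"
        using meas_cont[OF cG] mw by (rule borel_measurable_times)
      show "(\<lambda>x. G \<bar>1 - \<rho> x\<bar> * \<theta>' x) \<in> borel_measurable lborel"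
        using meas_cont[OF cG] meas_cont[OF c\<theta>'] by (rule borel_measurable_times)
      show "AE x in lborel. G \<bar>1 - \<rho> x\<bar> * w x = G \<bar>1 - \<rho> x\<bar> * \<theta>' x"
        using ae by eventually_elim simp
    qed
    then show ?thesis
      unfolding momentum_def Let_def \<theta>0_def[symmetric] w_def[symmetric] by simp
  qed
  show "energy \<alpha> \<beta> u v = (LINT x|lborel. eint \<alpha> \<beta> (\<rho> x) (\<rho>' x) (\<theta>' x) (v x) (v' x))"
  proof -
    define wu where "wu = wderiv u"
    define wv where "wv = wderiv v"
    have hu: "has_weak_deriv u wu" unfolding wu_def wderiv_def using wdu by (rule someI[of "has_weak_deriv u"])
    have hv: "has_weak_deriv v wv" unfolding wv_def wderiv_def using wdv by (rule someI[of "has_weak_deriv v"])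
    have aeu: "AE x in lborel. wu x = u' x" using hu wdu by (rule weak_deriv_unique_complex)
    have aev: "AE x in lborel. wv x = v' x" using hv wdv by (rule weak_deriv_unique_real)
    have mu[measurable]: "wu \<in> borel_measurable lborel"
      by (rule meas_locint) (use hu in \<open>auto simp: has_weak_deriv_def\<close>)
    have mv[measurable]: "wv \<in> borel_measurable lborel"
      by (rule meas_locint) (use hv in \<open>auto simp: has_weak_deriv_def\<close>)
    have m\<rho>[measurable]: "\<rho> \<in> borel_measurable lborel" by (rule meas_cont[OF c\<rho>])
    have m\<rho>'[measurable]: "\<rho>' \<in> borel_measurable lborel" by (rule meas_cont[OF c\<rho>'])
    have m\<theta>'[measurable]: "\<theta>' \<in> borel_measurable lborel" by (rule meas_cont[OF c\<theta>'])
    have mvv[measurable]: "v \<in> borel_measurable lborel" by (rule meas_cont[OF cv])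
    have mvv'[measurable]: "v' \<in> borel_measurable lborel" by (rule meas_cont[OF cv'])
    have "(LINT x|lborel. (1/2) * (cmod (wu x))^2 + (1/2) * (wv x)^2 + (1/4) * (1 - (cmod (u x))^2)^2
      + (\<beta>/4) * (v x)^4 - (\<alpha>/2) * (1 - (cmod (u x))^2) * (v x)^2)
      = (LINT x|lborel. eint \<alpha> \<beta> (\<rho> x) (\<rho>' x) (\<theta>' x) (v x) (v' x))"
      unfolding cu
    proof (rule integral_cong_AE)
      show "(\<lambda>x. (1/2) * (cmod (wu x))^2 + (1/2) * (wv x)^2 + (1/4) * (1 - (\<rho> x)^2)^2
        + (\<beta>/4) * (v x)^4 - (\<alpha>/2) * (1 - (\<rho> x)^2) * (v x)^2) \<in> borel_measurable lborel"
        by measurable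
      show "(\<lambda>x. eint \<alpha> \<beta> (\<rho> x) (\<rho>' x) (\<theta>' x) (v x) (v' x)) \<in> borel_measurable lborel"
        unfolding eint_def by measurable
      show "AE x in lborel. (1/2) * (cmod (wu x))^2 + (1/2) * (wv x)^2 + (1/4) * (1 - (\<rho> x)^2)^2
        + (\<beta>/4) * (v x)^4 - (\<alpha>/2) * (1 - (\<rho> x)^2) * (v x)^2 = eint \<alpha> \<beta> (\<rho> x) (\<rho>' x) (\<theta>' x) (v x) (v' x)"
        using aeu aev by eventually_elim (simp add: nu' eint_def)
    qed
    then show ?thesis unfolding energy_def wu_def wv_def .
  qed
qed


lemma amgm: fixes t a b :: real assumes "0 < t" shows "2 * a * b \<le> t * a^2 + b^2 / t"
proof -
  have "0 \<le> (t * a - b)^2 / t" using assms by simp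
  also have "(t * a - b)^2 / t = t * a^2 + b^2 / t - 2 * a * b"
    using assms by (simp add: power2_eq_square field_simps)
  finally show ?thesis by simp
qed

lemma sq_exp_aux: "(r * t - c / 2 * (1 - r^2))^2 = (r*t)^2 - c * (r * t * (1 - r^2)) + (c*c)/4 * (1 - r^2)^2" for r t c :: real
  by (simp add: power2_eq_square field_simps)

lemma amgm_sqrt2: fixes r t :: real
  shows "sqrt 2 / 2 * (r * t * (1 - r^2)) \<le> (1/2) * (r * t)^2 + (1/4) * (1 - r^2)^2"
proof -
  have s: "sqrt 2 * sqrt 2 = 2" by simp
  have "0 \<le> (r * t - sqrt 2 / 2 * (1 - r^2))^2" by simp
  also have "(r * t - sqrt 2 / 2 * (1 - r^2))^2 = (r*t)^2 - sqrt 2 * (r * t * (1 - r^2)) + (1/2) * (1 - r^2)^2"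
    unfolding sq_exp_aux s by simp
  finally show ?thesis by simp
qed

definition gpint :: "real \<Rightarrow> real \<Rightarrow> real \<Rightarrow> real" where
  "gpint r r' t' = (1/2) * (r'^2 + (r*t')^2) + (1/4) * (1 - r^2)^2"

definition vint :: "real \<Rightarrow> real \<Rightarrow> real \<Rightarrow> real \<Rightarrow> real \<Rightarrow> real" where
  "vint \<alpha> \<beta> r w w' = (1/2) * w'^2 + (\<beta>/4) * w^4 - (\<alpha>/2) * (1 - r^2) * w^2"

lemma eint_split: "eint \<alpha> \<beta> r r' t' w w' = gpint r r' t' + vint \<alpha> \<beta> r w w'"
  unfolding eint_def gpint_def vint_def by simp

lemma int_indicator_const:
  assumes "0 \<le> r"
  shows "(LINT x|lborel. indicator {0..r} x * c) = r * (c::real)"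
  using assms by simp

locale dat =
  fixes \<rho> \<rho>' \<theta>' v v' :: "real \<Rightarrow> real" and R :: real
  assumes d\<rho>: "\<And>x. (\<rho> has_real_derivative \<rho>' x) (at x)"
    and dv: "\<And>x. (v has_real_derivative v' x) (at x)"
    and c\<rho>': "continuous_on UNIV \<rho>'" and c\<theta>': "continuous_on UNIV \<theta>'" and cv': "continuous_on UNIV v'"
    and pos: "\<And>x. 0 < \<rho> x" and le1: "\<And>x. \<rho> x \<le> 1" and \<theta>nn: "\<And>x. 0 \<le> \<theta>' x"
    and supp: "\<And>x. R < \<bar>x\<bar> \<Longrightarrow> \<rho> x = 1 \<and> \<rho>' x = 0 \<and> \<theta>' x = 0 \<and> v x = 0 \<and> v' x = 0"
begin

lemma c\<rho>: "continuous_on UNIV \<rho>" using d\<rho> by (meson DERIV_continuous continuous_at_imp_continuous_on)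
lemma cv: "continuous_on UNIV v" using dv by (meson DERIV_continuous continuous_at_imp_continuous_on)

lemma sup1: "R < \<bar>x\<bar> \<Longrightarrow> \<rho> x = 1" using supp by blast
lemma sup2: "R < \<bar>x\<bar> \<Longrightarrow> \<rho>' x = 0" using supp by blast
lemma sup3: "R < \<bar>x\<bar> \<Longrightarrow> \<theta>' x = 0" using supp by blast
lemma sup4: "R < \<bar>x\<bar> \<Longrightarrow> v x = 0" using supp by blast
lemma sup5: "R < \<bar>x\<bar> \<Longrightarrow> v' x = 0" using supp by blast

lemmas cts = c\<rho> c\<rho>' c\<theta>' cv cv'
lemmas sups = sup1 sup2 sup3 sup4 sup5

lemma i_gp: "integrable lborel (\<lambda>x. gpint (\<rho> x) (\<rho>' x) (\<theta>' x))"
  unfolding gpint_def by (rule int_ccs[where R=R]) (use cts sups in \<open>auto intro!: continuous_intros\<close>)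
lemma i_vp: "integrable lborel (\<lambda>x. vint \<alpha> \<beta> (\<rho> x) (v x) (v' x))"
  unfolding vint_def by (rule int_ccs[where R=R]) (use cts sups in \<open>auto intro!: continuous_intros\<close>)
lemma i_e: "integrable lborel (\<lambda>x. eint \<alpha> \<beta> (\<rho> x) (\<rho>' x) (\<theta>' x) (v x) (v' x))"
  unfolding eint_def by (rule int_ccs[where R=R]) (use cts sups in \<open>auto intro!: continuous_intros\<close>)
lemma i_q: "integrable lborel (\<lambda>x. (1 - (\<rho> x)^2) * \<theta>' x)"
  by (rule int_ccs[where R=R]) (use cts sups in \<open>auto intro!: continuous_intros\<close>)
lemma i_v2: "integrable lborel (\<lambda>x. (v x)^2)"
  by (rule int_ccs[where R=R]) (use cts sups in \<open>auto intro!: continuous_intros\<close>)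
lemma i_v4: "integrable lborel (\<lambda>x. (v x)^4)"
  by (rule int_ccs[where R=R]) (use cts sups in \<open>auto intro!: continuous_intros\<close>)
lemma i_v'2: "integrable lborel (\<lambda>x. (v' x)^2)"
  by (rule int_ccs[where R=R]) (use cts sups in \<open>auto intro!: continuous_intros\<close>)
lemma i_r'2: "integrable lborel (\<lambda>x. (\<rho>' x)^2)"
  by (rule int_ccs[where R=R]) (use cts sups in \<open>auto intro!: continuous_intros\<close>)
lemma i_r2: "integrable lborel (\<lambda>x. (1 - (\<rho> x)^2)^2)"
  by (rule int_ccs[where R=R]) (use cts sups in \<open>auto intro!: continuous_intros\<close>)
lemma i_rv: "integrable lborel (\<lambda>x. (1 - (\<rho> x)^2) * (v x)^2)"
  by (rule int_ccs[where R=R]) (use cts sups in \<open>auto intro!: continuous_intros\<close>)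

lemma e_split: "(LINT x|lborel. eint \<alpha> \<beta> (\<rho> x) (\<rho>' x) (\<theta>' x) (v x) (v' x))
   = (LINT x|lborel. gpint (\<rho> x) (\<rho>' x) (\<theta>' x)) + (LINT x|lborel. vint \<alpha> \<beta> (\<rho> x) (v x) (v' x))"
  unfolding eint_split using i_gp i_vp by simp

lemma vint_eq: "(LINT x|lborel. vint \<alpha> \<beta> (\<rho> x) (v x) (v' x))
   = (1/2) * (LINT x|lborel. (v' x)^2) + (\<beta>/4) * (LINT x|lborel. (v x)^4) - (\<alpha>/2) * (LINT x|lborel. (1 - (\<rho> x)^2) * (v x)^2)"
proof -
  have "(LINT x|lborel. vint \<alpha> \<beta> (\<rho> x) (v x) (v' x))
     = (LINT x|lborel. ((1/2) * (v' x)^2 + (\<beta>/4) * (v x)^4) - (\<alpha>/2) * ((1 - (\<rho> x)^2) * (v x)^2))"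
    unfolding vint_def by (simp add: algebra_simps)
  also have "\<dots> = (LINT x|lborel. (1/2) * (v' x)^2 + (\<beta>/4) * (v x)^4) - (\<alpha>/2) * (LINT x|lborel. (1 - (\<rho> x)^2) * (v x)^2)"
    using i_v'2 i_v4 i_rv by simp
  also have "(LINT x|lborel. (1/2) * (v' x)^2 + (\<beta>/4) * (v x)^4) = (1/2) * (LINT x|lborel. (v' x)^2) + (\<beta>/4) * (LINT x|lborel. (v x)^4)"
    using i_v'2 i_v4 by simp
  finally show ?thesis .
qed

end


context dat begin

lemma L1:
  assumes a0: "0 \<le> \<alpha>" and b0: "0 \<le> \<beta>" and min0: "\<And>x. \<rho> 0 \<le> \<rho> x"
  shows "sqrt 2 * \<rho> 0 * ((1/2) * (LINT x|lborel. (1 - (\<rho> x)^2) * \<theta>' x)) - \<alpha> * (1 - \<rho> 0) * (LINT x|lborel. (v x)^2)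
     \<le> (LINT x|lborel. eint \<alpha> \<beta> (\<rho> x) (\<rho>' x) (\<theta>' x) (v x) (v' x))"
proof -
  have "(LINT x|lborel. sqrt 2 / 2 * \<rho> 0 * ((1 - (\<rho> x)^2) * \<theta>' x) - \<alpha> * (1 - \<rho> 0) * (v x)^2)
     \<le> (LINT x|lborel. eint \<alpha> \<beta> (\<rho> x) (\<rho>' x) (\<theta>' x) (v x) (v' x))"
  proof (rule integral_mono)
    show "integrable lborel (\<lambda>x. sqrt 2 / 2 * \<rho> 0 * ((1 - (\<rho> x)^2) * \<theta>' x) - \<alpha> * (1 - \<rho> 0) * (v x)^2)"
      using i_q i_v2 by simp
    show "integrable lborel (\<lambda>x. eint \<alpha> \<beta> (\<rho> x) (\<rho>' x) (\<theta>' x) (v x) (v' x))" by (rule i_e)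
    fix x
    define r where "r = \<rho> x"
    define t where "t = \<theta>' x"
    define w where "w = v x"
    have r0: "0 < r" and r1: "r \<le> 1" and rr: "\<rho> 0 \<le> r" and t0: "0 \<le> t"
      using pos le1 min0 \<theta>nn unfolding r_def t_def by auto
    have q0: "0 \<le> t * (1 - r^2)" using r0 r1 t0 by (simp add: power_le_one)
    have A: "sqrt 2 / 2 * (\<rho> 0 * ((1 - r^2) * t)) \<le> sqrt 2 / 2 * (r * t * (1 - r^2))"
    proof -
      have "\<rho> 0 * (t * (1 - r^2)) \<le> r * (t * (1 - r^2))" using rr q0 by (rule mult_right_mono)
      then have "\<rho> 0 * ((1 - r^2) * t) \<le> r * t * (1 - r^2)" by (simp add: algebra_simps)
      then show ?thesis by (intro mult_left_mono) auto
    qed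
    have B: "(\<alpha>/2) * (1 - r^2) * w^2 \<le> \<alpha> * (1 - \<rho> 0) * w^2"
    proof -
      have "1 - r^2 \<le> 2 * (1 - \<rho> 0)"
      proof -
        have "1 - r^2 = (1 - r) * (1 + r)" by (simp add: power2_eq_square algebra_simps)
        also have "\<dots> \<le> (1 - r) * 2" using r1 r0 by (intro mult_left_mono) auto
        also have "\<dots> \<le> 2 * (1 - \<rho> 0)" using rr by simp
        finally show ?thesis .
      qed
      then have "(\<alpha>/2) * ((1 - r^2) * w^2) \<le> (\<alpha>/2) * (2 * (1 - \<rho> 0) * w^2)"
        using a0 by (intro mult_left_mono mult_right_mono) auto
      then show ?thesis by (simp add: algebra_simps)
    qed
    have C: "sqrt 2 / 2 * (r * t * (1 - r^2)) \<le> (1/2) * (r * t)^2 + (1/4) * (1 - r^2)^2"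
      by (rule amgm_sqrt2)
    have D: "0 \<le> (1/2) * (\<rho>' x)^2 + (1/2) * (v' x)^2 + (\<beta>/4) * w^4"
      using b0 by (simp add: zero_le_even_power)
    have E: "eint \<alpha> \<beta> (\<rho> x) (\<rho>' x) (\<theta>' x) (v x) (v' x) = ((1/2) * (\<rho>' x)^2 + (1/2) * (v' x)^2 + (\<beta>/4) * w^4)
       + ((1/2) * (r * t)^2 + (1/4) * (1 - r^2)^2) - (\<alpha>/2) * (1 - r^2) * w^2"
      unfolding eint_def r_def t_def w_def by (simp add: algebra_simps)
    have F: "sqrt 2 / 2 * \<rho> 0 * ((1 - (\<rho> x)^2) * \<theta>' x) - \<alpha> * (1 - \<rho> 0) * (v x)^2
       = sqrt 2 / 2 * (\<rho> 0 * ((1 - r^2) * t)) - \<alpha> * (1 - \<rho> 0) * w^2"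
      unfolding r_def t_def w_def by (simp add: mult.assoc)
    show "sqrt 2 / 2 * \<rho> 0 * ((1 - (\<rho> x)^2) * \<theta>' x) - \<alpha> * (1 - \<rho> 0) * (v x)^2
       \<le> eint \<alpha> \<beta> (\<rho> x) (\<rho>' x) (\<theta>' x) (v x) (v' x)"
      unfolding E F using A B C D by linarith
  qed
  moreover have "(LINT x|lborel. sqrt 2 / 2 * \<rho> 0 * ((1 - (\<rho> x)^2) * \<theta>' x) - \<alpha> * (1 - \<rho> 0) * (v x)^2)
     = sqrt 2 * \<rho> 0 * ((1/2) * (LINT x|lborel. (1 - (\<rho> x)^2) * \<theta>' x)) - \<alpha> * (1 - \<rho> 0) * (LINT x|lborel. (v x)^2)"
    using i_q i_v2 by simp
  ultimately show ?thesis by simp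
qed

lemma L2:
  assumes a0: "0 \<le> \<alpha>" and b0: "0 \<le> \<beta>"
  shows "(1/4) * (LINT x|lborel. (1 - (\<rho> x)^2)^2) \<le> (LINT x|lborel. eint \<alpha> \<beta> (\<rho> x) (\<rho>' x) (\<theta>' x) (v x) (v' x)) + (\<alpha>/2) * (LINT x|lborel. (v x)^2)"
    and "(1/2) * (LINT x|lborel. (\<rho>' x)^2) \<le> (LINT x|lborel. eint \<alpha> \<beta> (\<rho> x) (\<rho>' x) (\<theta>' x) (v x) (v' x)) + (\<alpha>/2) * (LINT x|lborel. (v x)^2)"
proof -
  have key: "(\<alpha>/2) * (1 - (\<rho> x)^2) * (v x)^2 \<le> (\<alpha>/2) * (v x)^2" for x
  proof -
    have "1 - (\<rho> x)^2 \<le> 1" by simp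
    then have "(1 - (\<rho> x)^2) * (v x)^2 \<le> 1 * (v x)^2" by (intro mult_right_mono) auto
    then show ?thesis using a0 by (simp add: mult_left_mono mult.assoc)
  qed
  have eexp: "eint \<alpha> \<beta> (\<rho> x) (\<rho>' x) (\<theta>' x) (v x) (v' x) = (1/2) * (\<rho>' x)^2 + (1/2) * (\<rho> x * \<theta>' x)^2
     + (1/2) * (v' x)^2 + (\<beta>/4) * (v x)^4 + (1/4) * (1 - (\<rho> x)^2)^2 - (\<alpha>/2) * (1 - (\<rho> x)^2) * (v x)^2" for x
    unfolding eint_def by (simp add: algebra_simps)
  have enn: "0 \<le> (1/2) * (\<rho>' x)^2" "0 \<le> (1/2) * (\<rho> x * \<theta>' x)^2" "0 \<le> (1/2) * (v' x)^2"
     "0 \<le> (\<beta>/4) * (v x)^4" "0 \<le> (1/4) * (1 - (\<rho> x)^2)^2" for x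
    using b0 by (auto simp: zero_le_even_power)
  have "(LINT x|lborel. (1/4) * (1 - (\<rho> x)^2)^2 - (\<alpha>/2) * (v x)^2) \<le> (LINT x|lborel. eint \<alpha> \<beta> (\<rho> x) (\<rho>' x) (\<theta>' x) (v x) (v' x))"
  proof (rule integral_mono)
    show "integrable lborel (\<lambda>x. (1/4) * (1 - (\<rho> x)^2)^2 - (\<alpha>/2) * (v x)^2)" using i_r2 i_v2 by simp
    show "integrable lborel (\<lambda>x. eint \<alpha> \<beta> (\<rho> x) (\<rho>' x) (\<theta>' x) (v x) (v' x))" by (rule i_e)
    fix x show "(1/4) * (1 - (\<rho> x)^2)^2 - (\<alpha>/2) * (v x)^2 \<le> eint \<alpha> \<beta> (\<rho> x) (\<rho>' x) (\<theta>' x) (v x) (v' x)"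
      using key[of x] enn[of x] unfolding eexp by linarith
  qed
  then show "(1/4) * (LINT x|lborel. (1 - (\<rho> x)^2)^2) \<le> (LINT x|lborel. eint \<alpha> \<beta> (\<rho> x) (\<rho>' x) (\<theta>' x) (v x) (v' x)) + (\<alpha>/2) * (LINT x|lborel. (v x)^2)"
    using i_r2 i_v2 by simp
  have "(LINT x|lborel. (1/2) * (\<rho>' x)^2 - (\<alpha>/2) * (v x)^2) \<le> (LINT x|lborel. eint \<alpha> \<beta> (\<rho> x) (\<rho>' x) (\<theta>' x) (v x) (v' x))"
  proof (rule integral_mono)
    show "integrable lborel (\<lambda>x. (1/2) * (\<rho>' x)^2 - (\<alpha>/2) * (v x)^2)" using i_r'2 i_v2 by simp
    show "integrable lborel (\<lambda>x. eint \<alpha> \<beta> (\<rho> x) (\<rho>' x) (\<theta>' x) (v x) (v' x))" by (rule i_e)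
    fix x show "(1/2) * (\<rho>' x)^2 - (\<alpha>/2) * (v x)^2 \<le> eint \<alpha> \<beta> (\<rho> x) (\<rho>' x) (\<theta>' x) (v x) (v' x)"
      using key[of x] enn[of x] unfolding eexp by linarith
  qed
  then show "(1/2) * (LINT x|lborel. (\<rho>' x)^2) \<le> (LINT x|lborel. eint \<alpha> \<beta> (\<rho> x) (\<rho>' x) (\<theta>' x) (v x) (v' x)) + (\<alpha>/2) * (LINT x|lborel. (v x)^2)"
    using i_r'2 i_v2 by simp
qed

lemma L3:
  assumes t0: "0 < t"
  shows "(1 - \<rho> 0)^2 \<le> t * (LINT x|lborel. (1 - (\<rho> x)^2)^2) + (1/t) * (LINT x|lborel. (\<rho>' x)^2)"
proof -
  define b where "b = \<bar>R\<bar> + 1"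
  have b0: "0 \<le> b" unfolding b_def by simp
  have rb: "\<rho> b = 1" using sup1[of b] unfolding b_def by simp
  have ftc: "(LINT x|lborel. indicator {0..b} x *\<^sub>R (- 2 * (1 - \<rho> x) * \<rho>' x)) = (1 - \<rho> b)^2 - (1 - \<rho> 0)^2"
  proof (rule integral_FTC_atLeastAtMost[OF b0])
    fix x
    have "((\<lambda>x. (1 - \<rho> x)^2) has_real_derivative (- 2 * (1 - \<rho> x) * \<rho>' x)) (at x)"
      by (auto intro!: derivative_eq_intros d\<rho> simp: algebra_simps)
    then show "((\<lambda>x. (1 - \<rho> x)^2) has_vector_derivative (- 2 * (1 - \<rho> x) * \<rho>' x)) (at x within {0..b})"
      by (auto simp: has_real_derivative_iff_has_vector_derivative intro: has_vector_derivative_at_within)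
  next
    show "continuous_on {0..b} (\<lambda>x. - 2 * (1 - \<rho> x) * \<rho>' x)"
      using cts by (auto intro!: continuous_intros intro: continuous_on_subset)
  qed
  have cF: "continuous_on {0..b} (\<lambda>x. - 2 * (1 - \<rho> x) * \<rho>' x)"
    using cts by (auto intro!: continuous_intros intro: continuous_on_subset)
  have iF: "integrable lborel (\<lambda>x. indicator {0..b} x *\<^sub>R (- 2 * (1 - \<rho> x) * \<rho>' x))"
    using borel_integrable_atLeastAtMost'[OF cF] unfolding set_integrable_def .
  have "(1 - \<rho> 0)^2 = (LINT x|lborel. - (indicator {0..b} x *\<^sub>R (- 2 * (1 - \<rho> x) * \<rho>' x)))"
    using ftc rb by simp
  also have "\<dots> \<le> (LINT x|lborel. t * (1 - (\<rho> x)^2)^2 + (1/t) * (\<rho>' x)^2)"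
  proof (rule integral_mono)
    show "integrable lborel (\<lambda>x. - (indicator {0..b} x *\<^sub>R (- 2 * (1 - \<rho> x) * \<rho>' x)))" using iF by simp
    show "integrable lborel (\<lambda>x. t * (1 - (\<rho> x)^2)^2 + (1/t) * (\<rho>' x)^2)" using i_r2 i_r'2 by simp
    fix x
    have r0: "0 < \<rho> x" and r1: "\<rho> x \<le> 1" using pos le1 by auto
    have a1: "(1 - \<rho> x)^2 \<le> (1 - (\<rho> x)^2)^2"
    proof (rule power_mono)
      show "1 - \<rho> x \<le> 1 - (\<rho> x)^2" using r0 r1 by (simp add: power2_eq_square mult_left_le)
    qed (use r1 in simp)
    have "2 * (1 - \<rho> x) * \<rho>' x \<le> t * (1 - \<rho> x)^2 + (\<rho>' x)^2 / t" by (rule amgm[OF t0])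
    also have "\<dots> \<le> t * (1 - (\<rho> x)^2)^2 + (1/t) * (\<rho>' x)^2"
      using a1 t0 by (simp add: mult_left_mono)
    finally have m: "2 * (1 - \<rho> x) * \<rho>' x \<le> t * (1 - (\<rho> x)^2)^2 + (1/t) * (\<rho>' x)^2" .
    have nn: "0 \<le> t * (1 - (\<rho> x)^2)^2 + (1/t) * (\<rho>' x)^2" using t0 by simp
    show "- (indicator {0..b} x *\<^sub>R (- 2 * (1 - \<rho> x) * \<rho>' x)) \<le> t * (1 - (\<rho> x)^2)^2 + (1/t) * (\<rho>' x)^2"
    proof (cases "x \<in> {0..b}")
      case True
      have "- (- 2 * (1 - \<rho> x) * \<rho>' x) = 2 * (1 - \<rho> x) * \<rho>' x" by (simp add: algebra_simps)
      with True m show ?thesis by simp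
    next
      case False with nn show ?thesis by simp
    qed
  qed
  also have "\<dots> = t * (LINT x|lborel. (1 - (\<rho> x)^2)^2) + (1/t) * (LINT x|lborel. (\<rho>' x)^2)"
    using i_r2 i_r'2 by simp
  finally show ?thesis .
qed

lemma L4:
  assumes t0: "0 < t" and r0: "0 \<le> r"
  shows "(1 - \<rho> 0) - (t * r + (1/t) * (LINT x|lborel. (\<rho>' x)^2)) / 2 \<le> 1 - \<rho> r"
proof -
  have ftc: "(LINT x|lborel. indicator {0..r} x *\<^sub>R (\<rho>' x)) = \<rho> r - \<rho> 0"
  proof (rule integral_FTC_atLeastAtMost[OF r0])
    fix x
    show "(\<rho> has_vector_derivative \<rho>' x) (at x within {0..r})"
      using d\<rho>[of x] by (auto simp: has_real_derivative_iff_has_vector_derivative intro: has_vector_derivative_at_within)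
  next
    show "continuous_on {0..r} \<rho>'" using cts by (auto intro: continuous_on_subset)
  qed
  have iF: "integrable lborel (\<lambda>x. indicator {0..r} x *\<^sub>R \<rho>' x)"
    using borel_integrable_atLeastAtMost'[of 0 r "\<rho>'"] cts
    unfolding set_integrable_def by (auto intro: continuous_on_subset)
  have iI: "integrable lborel (\<lambda>x. indicator {0..r} x * (t/2))"
    using borel_integrable_atLeastAtMost[of 0 r "\<lambda>x. t/2"] by (simp add: mult.commute)
  have "\<rho> r - \<rho> 0 = (LINT x|lborel. indicator {0..r} x *\<^sub>R (\<rho>' x))" using ftc by simp
  also have "\<dots> \<le> (LINT x|lborel. indicator {0..r} x * (t/2) + (1/(2*t)) * (\<rho>' x)^2)"
  proof (rule integral_mono)
    show "integrable lborel (\<lambda>x. indicator {0..r} x *\<^sub>R \<rho>' x)" by (rule iF)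
    show "integrable lborel (\<lambda>x. indicator {0..r} x * (t/2) + (1/(2*t)) * (\<rho>' x)^2)" using iI i_r'2 by simp
    fix x
    have "2 * 1 * \<rho>' x \<le> t * 1^2 + (\<rho>' x)^2 / t" by (rule amgm[OF t0])
    then have m: "\<rho>' x \<le> t/2 + (1/(2*t)) * (\<rho>' x)^2" by (simp add: field_simps)
    have nn: "0 \<le> (1/(2*t)) * (\<rho>' x)^2" using t0 by simp
    show "indicator {0..r} x *\<^sub>R \<rho>' x \<le> indicator {0..r} x * (t/2) + (1/(2*t)) * (\<rho>' x)^2"
      using m nn by (cases "x \<in> {0..r}") auto
  qed
  also have "\<dots> = r * (t/2) + (1/(2*t)) * (LINT x|lborel. (\<rho>' x)^2)"
    using iI i_r'2 r0 by simp
  finally show ?thesis using t0 by (simp add: field_simps)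
qed

lemma L5:
  assumes t0: "0 < t"
  shows "(LINT x|lborel. (1 - (\<rho> x)^2) * (v x)^2) \<le> (t * (LINT x|lborel. (1 - (\<rho> x)^2)^2) + (1/t) * (LINT x|lborel. (v x)^4)) / 2"
proof -
  have "(LINT x|lborel. (1 - (\<rho> x)^2) * (v x)^2) \<le> (LINT x|lborel. (t * (1 - (\<rho> x)^2)^2 + (1/t) * (v x)^4) / 2)"
  proof (rule integral_mono)
    show "integrable lborel (\<lambda>x. (1 - (\<rho> x)^2) * (v x)^2)" by (rule i_rv)
    show "integrable lborel (\<lambda>x. (t * (1 - (\<rho> x)^2)^2 + (1/t) * (v x)^4) / 2)" using i_r2 i_v4 by simp
    fix x
    have "2 * (1 - (\<rho> x)^2) * (v x)^2 \<le> t * (1 - (\<rho> x)^2)^2 + ((v x)^2)^2 / t" by (rule amgm[OF t0])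
    then show "(1 - (\<rho> x)^2) * (v x)^2 \<le> (t * (1 - (\<rho> x)^2)^2 + (1/t) * (v x)^4) / 2"
      by (simp add: power_mult[symmetric] field_simps)
  qed
  also have "\<dots> = (t * (LINT x|lborel. (1 - (\<rho> x)^2)^2) + (1/t) * (LINT x|lborel. (v x)^4)) / 2"
    using i_r2 i_v4 by simp
  finally show ?thesis .
qed

end


lemma locally_zero_deriv:
  fixes f :: "real \<Rightarrow> real"
  assumes z: "\<And>y. R < \<bar>y\<bar> \<Longrightarrow> f y = 0" and x: "R < \<bar>x\<bar>"
  shows "(f has_real_derivative 0) (at x)"
proof -
  have "open {y::real. R < \<bar>y\<bar>}" by (intro open_Collect_less continuous_intros)
  then have ev: "eventually (\<lambda>y. y \<in> {y::real. R < \<bar>y\<bar>}) (nhds x)"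
    using x by (intro eventually_nhds_in_open) auto
  have "eventually (\<lambda>y. f y = 0) (nhds x)" using ev by eventually_elim (use z in auto)
  then show ?thesis
    by (subst DERIV_cong_ev[where g="\<lambda>_. 0", OF refl _ refl]) auto
qed

lemma C0inf_D:
  fixes f :: "real \<Rightarrow> real"
  assumes "C0inf f"
  shows "\<And>x. (f has_real_derivative deriv f x) (at x)"
    and "continuous_on UNIV (deriv f)"
    and "\<exists>R. \<forall>x. R < \<bar>x\<bar> \<longrightarrow> f x = 0 \<and> deriv f x = 0"
proof -
  have sm: "\<And>k x. ((deriv ^^ k) f) differentiable (at x)" using assms unfolding C0inf_def smooth_fun_def by blast
  show d: "(f has_real_derivative deriv f x) (at x)" for x
    using sm[of 0 x] by (simp add: DERIV_deriv_iff_real_differentiable)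
  show "continuous_on UNIV (deriv f)"
    using sm[of 1] by (simp add: continuous_at_imp_continuous_on differentiable_imp_continuous_within)
  obtain R where R: "\<And>x. R < \<bar>x\<bar> \<Longrightarrow> f x = 0" using assms unfolding C0inf_def by blast
  have "deriv f x = 0" if "R < \<bar>x\<bar>" for x
    using DERIV_unique[OF d[of x] locally_zero_deriv[OF R that]] .
  with R show "\<exists>R. \<forall>x. R < \<bar>x\<bar> \<longrightarrow> f x = 0 \<and> deriv f x = 0" by blast
qed

lemma X0_facts:
  fixes u :: "real \<Rightarrow> complex" and v :: "real \<Rightarrow> real"
  assumes mem: "(u, v) \<in> X0qm q m"
  obtains \<theta> \<theta>' R where
    "dat (\<lambda>x. cmod (u x)) (deriv (\<lambda>x. cmod (u x))) \<theta>' v (deriv v) R"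
    "\<And>x. cmod (u 0) \<le> cmod (u x)"
    "\<And>x y. 0 \<le> x \<Longrightarrow> x \<le> y \<Longrightarrow> cmod (u x) \<le> cmod (u y)"
    "\<And>x. cmod (u (-x)) = cmod (u x)"
    "q = (1/2) * (LINT x|lborel. (1 - (cmod (u x))^2) * \<theta>' x)"
    "m = (LINT x|lborel. (v x)^2)"
    "\<And>\<alpha> \<beta>. energy \<alpha> \<beta> u v = (LINT x|lborel. eint \<alpha> \<beta> (cmod (u x)) (deriv (\<lambda>x. cmod (u x)) x) (\<theta>' x) (v x) (deriv v x))"
    "\<And>x. (\<theta> has_real_derivative \<theta>' x) (at x)"
    "u = (\<lambda>x. complex_of_real (cmod (u x)) * cis (\<theta> x))"
    "(u, v) \<in> Xqm q m"
proof -
  define \<rho> where "\<rho> = (\<lambda>x. cmod (u x))"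
  from mem have X: "(u, v) \<in> Xqm q m" unfolding X0qm_def by blast
  from mem obtain \<theta> \<theta>' where
    ul: "\<And>x. u x = complex_of_real (cmod (u x)) * cis (\<theta> x)"
    and d\<theta>: "\<And>x. (\<theta> has_real_derivative \<theta>' x) (at x)"
    and c1: "C0inf (\<lambda>x. 1 - cmod (u x))" and s1: "sym_dec (\<lambda>x. 1 - cmod (u x))"
    and c2: "C0inf \<theta>'" and s2: "sym_dec \<theta>'" and c3: "C0inf v" and s3: "sym_dec v"
    unfolding X0qm_def by blast
  from X have XS: "(u, v) \<in> Xspace" and mom: "momentum u = q" and mas: "L2norm v ^ 2 = m"
    unfolding Xqm_def by auto
  from XS have nz: "\<And>x. u x \<noteq> 0" and lt2: "\<And>x. cmod (u x) < 2"
    unfolding Xspace_def NEspace_def by auto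
  define f where "f = (\<lambda>x. 1 - cmod (u x))"
  have \<rho>f: "\<rho> = (\<lambda>x. 1 - f x)" unfolding \<rho>_def f_def by simp
  note F = C0inf_D[OF c1[folded f_def]]
  note T = C0inf_D[OF c2]
  note V = C0inf_D[OF c3]
  obtain R1 where R1: "\<And>x. R1 < \<bar>x\<bar> \<Longrightarrow> f x = 0 \<and> deriv f x = 0" using F(3) by blast
  obtain R2 where R2: "\<And>x. R2 < \<bar>x\<bar> \<Longrightarrow> \<theta>' x = 0 \<and> deriv \<theta>' x = 0" using T(3) by blast
  obtain R3 where R3: "\<And>x. R3 < \<bar>x\<bar> \<Longrightarrow> v x = 0 \<and> deriv v x = 0" using V(3) by blast
  define R where "R = max R1 (max R2 R3)"
  have d\<rho>0: "(\<rho> has_real_derivative - deriv f x) (at x)" for x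
    unfolding \<rho>f by (auto intro!: derivative_eq_intros F(1))
  have d\<rho>: "\<rho>' = (\<lambda>x. - deriv f x)" if "\<rho>' = deriv \<rho>" for \<rho>'
    using that d\<rho>0 by (auto intro!: DERIV_imp_deriv)
  define \<rho>' where "\<rho>' = deriv \<rho>"
  have \<rho>'e: "\<rho>' = (\<lambda>x. - deriv f x)" using d\<rho> \<rho>'_def by blast
  have pos: "0 < \<rho> x" for x using nz[of x] unfolding \<rho>_def by simp
  have le1: "\<rho> x \<le> 1" for x using s1 unfolding sym_dec_def \<rho>_def by auto
  have ev: "\<rho> (-x) = \<rho> x" for x using s1 unfolding sym_dec_def \<rho>_def by auto
  have mono: "\<rho> x \<le> \<rho> y" if "0 \<le> x" "x \<le> y" for x y
    using s1 that unfolding sym_dec_def \<rho>_def by force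
  have min0: "\<rho> 0 \<le> \<rho> x" for x
  proof (cases "0 \<le> x")
    case True then show ?thesis using mono[of 0 x] by simp
  next
    case False then show ?thesis using mono[of 0 "-x"] ev[of x] by simp
  qed
  have \<theta>nn: "0 \<le> \<theta>' x" for x using s2 unfolding sym_dec_def by auto
  have supp: "R < \<bar>x\<bar> \<Longrightarrow> \<rho> x = 1 \<and> \<rho>' x = 0 \<and> \<theta>' x = 0 \<and> v x = 0 \<and> deriv v x = 0" for x
    using R1[of x] R2[of x] R3[of x] unfolding R_def \<rho>'e \<rho>f by auto
  have D: "dat \<rho> \<rho>' \<theta>' v (deriv v) R"
  proof
    show "(\<rho> has_real_derivative \<rho>' x) (at x)" for x unfolding \<rho>'e using d\<rho>0 .
    show "(v has_real_derivative deriv v x) (at x)" for x by (rule V(1))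
    show "continuous_on UNIV \<rho>'" unfolding \<rho>'e using F(2) by (intro continuous_intros)
    show "continuous_on UNIV \<theta>'" using T(1) by (meson DERIV_continuous continuous_at_imp_continuous_on)
    show "continuous_on UNIV (deriv v)" by (rule V(2))
  qed (use pos le1 \<theta>nn supp in auto)
  have ueq: "u = (\<lambda>x. complex_of_real (\<rho> x) * cis (\<theta> x))" using ul unfolding \<rho>_def by (rule ext)
  note M = master[where \<rho>=\<rho> and \<rho>'=\<rho>' and \<theta>=\<theta> and \<theta>'=\<theta>' and v=v and v'="deriv v" and R=R and u=u,
      OF _ d\<theta> V(1) dat.c\<rho>'[OF D] dat.c\<theta>'[OF D] V(2) pos _ supp ueq]
  have lt2': "\<rho> x < 2" for x using lt2 unfolding \<rho>_def by simp
  have dr: "(\<rho> has_real_derivative \<rho>' x) (at x)" for x using dat.d\<rho>[OF D] .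
  note M' = M[OF dr lt2']
  have Geq: "G \<bar>1 - \<rho> x\<bar> * \<theta>' x = (1 - (\<rho> x)^2) * \<theta>' x" for x
    using le1[of x] unfolding G_def by (simp add: power2_eq_square algebra_simps)
  show ?thesis
  proof (rule that[of \<theta>' R \<theta>])
    show "dat (\<lambda>x. cmod (u x)) (deriv (\<lambda>x. cmod (u x))) \<theta>' v (deriv v) R"
      using D unfolding \<rho>'_def \<rho>_def .
    show "cmod (u 0) \<le> cmod (u x)" for x using min0 unfolding \<rho>_def .
    show "0 \<le> x \<Longrightarrow> x \<le> y \<Longrightarrow> cmod (u x) \<le> cmod (u y)" for x y using mono unfolding \<rho>_def .
    show "cmod (u (-x)) = cmod (u x)" for x using ev unfolding \<rho>_def .
    show "q = (1/2) * (LINT x|lborel. (1 - (cmod (u x))^2) * \<theta>' x)"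
      using M'(2) mom Geq unfolding \<rho>_def by simp
    show "m = (LINT x|lborel. (v x)^2)" using M'(3) mas by simp
    show "energy \<alpha> \<beta> u v = (LINT x|lborel. eint \<alpha> \<beta> (cmod (u x)) (deriv (\<lambda>x. cmod (u x)) x) (\<theta>' x) (v x) (deriv v x))" for \<alpha> \<beta>
      using M'(4) unfolding \<rho>_def \<rho>'_def .
    show "(\<theta> has_real_derivative \<theta>' x) (at x)" for x by (rule d\<theta>)
    show "u = (\<lambda>x. complex_of_real (cmod (u x)) * cis (\<theta> x))" using ul by (rule ext)
    show "(u, v) \<in> Xqm q m" by (rule X)
  qed
qed


lemma sqpos_deriv:
  fixes h :: "real \<Rightarrow> real"
  assumes d: "(h has_real_derivative h') (at x)"
  shows "((\<lambda>y. (max 0 (h y))^2) has_real_derivative 2 * max 0 (h x) * h') (at x)"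
proof -
  have hc: "(h \<longlongrightarrow> h x) (at x)" using DERIV_isCont[OF d] by (rule isContD)
  consider "0 < h x" | "h x < 0" | "h x = 0" by linarith
  then show ?thesis
  proof cases
    case 1
    have ev: "eventually (\<lambda>y. 0 < h y) (at x)" using order_tendstoD(1)[OF hc 1] .
    have "((\<lambda>y. (h y)^2) has_real_derivative 2 * h x * h') (at x)"
      by (auto intro!: derivative_eq_intros d)
    moreover have "eventually (\<lambda>y. (max 0 (h y))^2 = (h y)^2) (at x within UNIV)"
      using ev by eventually_elim auto
    ultimately show ?thesis using 1
      by (subst has_field_derivative_cong_eventually[where g="\<lambda>y. (h y)^2"]) auto
  next
    case 2
    have ev: "eventually (\<lambda>y. h y < 0) (at x)" using order_tendstoD(2)[OF hc 2] .
    have "eventually (\<lambda>y. (max 0 (h y))^2 = 0) (at x within UNIV)"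
      using ev by eventually_elim auto
    then show ?thesis using 2
      by (subst has_field_derivative_cong_eventually[where g="\<lambda>y. 0"]) auto
  next
    case 3
    have q: "((\<lambda>y. (h y - h x) / (y - x)) \<longlongrightarrow> h') (at x)"
      using d unfolding has_field_derivative_iff .
    have "((\<lambda>y. \<bar>h y - h x\<bar> * \<bar>(h y - h x) / (y - x)\<bar>) \<longlongrightarrow> \<bar>h x - h x\<bar> * \<bar>h'\<bar>) (at x)"
      by (intro tendsto_intros hc q)
    then have lim0: "((\<lambda>y. \<bar>h y - h x\<bar> * \<bar>(h y - h x) / (y - x)\<bar>) \<longlongrightarrow> 0) (at x)" by simp
    have "((\<lambda>y. ((max 0 (h y))^2 - (max 0 (h x))^2) / (y - x)) \<longlongrightarrow> 0) (at x)"
    proof (rule Lim_null_comparison[OF _ lim0])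
      show "\<forall>\<^sub>F y in at x. norm (((max 0 (h y))^2 - (max 0 (h x))^2) / (y - x)) \<le> \<bar>h y - h x\<bar> * \<bar>(h y - h x) / (y - x)\<bar>"
      proof (rule always_eventually, rule allI)
        fix y
        have "(max 0 (h y))^2 \<le> (h y)^2" by (rule power_mono_even) auto
        then have "\<bar>(max 0 (h y))^2\<bar> \<le> \<bar>h y\<bar> * \<bar>h y\<bar>" by (simp add: power2_eq_square)
        then show "norm (((max 0 (h y))^2 - (max 0 (h x))^2) / (y - x)) \<le> \<bar>h y - h x\<bar> * \<bar>(h y - h x) / (y - x)\<bar>"
          using 3 by (simp add: abs_divide abs_mult divide_right_mono)
      qed
    qed
    then show ?thesis using 3 unfolding has_field_derivative_iff by simp
  qed
qed

definition gb :: "real \<Rightarrow> real" where "gb y = (max 0 (1 - y^2))^2"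
definition gb' :: "real \<Rightarrow> real" where "gb' y = 2 * max 0 (1 - y^2) * (- 2 * y)"

lemma gb_deriv: "(gb has_real_derivative gb' y) (at y)"
  unfolding gb_def gb'_def
  by (rule sqpos_deriv) (auto intro!: derivative_eq_intros)

lemma gb_cont: "continuous_on UNIV gb" unfolding gb_def by (intro continuous_intros)
lemma gb'_cont: "continuous_on UNIV gb'" unfolding gb'_def by (intro continuous_intros)

lemma gb_nn: "0 \<le> gb y" unfolding gb_def by simp
lemma gb_le1: "gb y \<le> 1"
proof -
  have "max 0 (1 - y^2) \<le> 1" by simp
  then show ?thesis unfolding gb_def by (simp add: power_le_one)
qed
lemma gb_supp: "1 \<le> \<bar>y\<bar> \<Longrightarrow> gb y = 0 \<and> gb' y = 0"
proof -
  assume a: "1 \<le> \<bar>y\<bar>"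
  have "1 * 1 \<le> \<bar>y\<bar> * \<bar>y\<bar>" by (rule mult_mono) (use a in auto)
  then have "1 \<le> y^2" by (simp add: power2_eq_square)
  then have "max 0 (1 - y^2) = 0" by simp
  then show ?thesis unfolding gb_def gb'_def by simp
qed
lemma gb_big: "\<bar>y\<bar> \<le> 1/2 \<Longrightarrow> 9/16 \<le> gb y"
proof -
  assume a: "\<bar>y\<bar> \<le> 1/2"
  have "\<bar>y\<bar> * \<bar>y\<bar> \<le> 1/2 * (1/2)" by (rule mult_mono) (use a in auto)
  then have "y^2 \<le> 1/4" by (simp add: power2_eq_square)
  then have a: "3/4 \<le> max 0 (1 - y^2)" by simp
  have "(3/4)^2 \<le> (max 0 (1 - y^2))^2" by (rule power_mono[OF a]) simp
  then show ?thesis unfolding gb_def by (simp add: power2_eq_square)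
qed

lemma prim_deriv:
  fixes g :: "real \<Rightarrow> real"
  assumes c: "continuous_on UNIV g" and z: "\<And>x. x < a \<Longrightarrow> g x = 0"
  shows "((\<lambda>y. integral {a-1..y} g) has_real_derivative g x) (at x)"
proof (cases "a - 1 < x")
  case True
  have c': "continuous_on {a-1..x+1} g" using continuous_on_subset[OF c subset_UNIV] .
  have xin: "x \<in> {a-1..x+1}" using True by simp
  have d: "((\<lambda>y. integral {a-1..y} g) has_real_derivative g x) (at x within {a-1..x+1})"
    using integral_has_real_derivative[OF c' xin] .
  have "x \<in> interior {a-1..x+1}" using True by simp
  then have "at x within {a-1..x+1} = at x" by (rule at_within_interior)
  with d show ?thesis by simp
next
  case False
  then have xa: "x < a" by simp
  have zero: "integral {a-1..y} g = 0" if ya: "y < a" for y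
  proof -
    have "integral {a-1..y} g = integral {a-1..y} (\<lambda>_. 0::real)"
    proof (rule integral_cong)
      fix t assume "t \<in> {a-1..y}"
      then have "t < a" using ya by simp
      then show "g t = 0" by (rule z)
    qed
    then show ?thesis by simp
  qed
  have ev0: "eventually (\<lambda>y. y < a) (at x)" using order_tendstoD(2)[OF tendsto_ident_at xa] .
  have ev: "eventually (\<lambda>y. integral {a-1..y} g = 0) (at x within UNIV)"
    using ev0 by (rule eventually_mono) (rule zero)
  have "((\<lambda>y. integral {a-1..y} g) has_real_derivative 0) (at x)"
  proof (subst has_field_derivative_cong_eventually[OF ev])
    show "integral {a-1..x} g = 0" by (rule zero[OF xa])
    show "((\<lambda>y. 0) has_real_derivative 0) (at x)" by simp
  qed
  then show ?thesis using z[OF xa] by simp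
qed

lemma int_scale:
  fixes F :: "real \<Rightarrow> real"
  assumes L: "0 < L"
  shows "(LINT x|lborel. F ((x - D) / L)) = L * (LINT y|lborel. F y)"
proof -
  have "(LINT x|lborel. F ((x - D) / L)) = \<bar>L\<bar> *\<^sub>R (LINT x|lborel. F ((D + L * x - D) / L))"
    using L by (intro lborel_integral_real_affine) simp
  then show ?thesis using L by simp
qed

lemma int_lower:
  fixes h :: "real \<Rightarrow> real"
  assumes i: "integrable lborel h" and nn: "\<And>x. 0 \<le> h x" and ab: "a \<le> b"
    and lo: "\<And>x. a \<le> x \<Longrightarrow> x \<le> b \<Longrightarrow> c \<le> h x" and c0: "0 \<le> c"
  shows "c * (b - a) \<le> (LINT x|lborel. h x)"
proof -
  have ii: "integrable lborel (\<lambda>x. indicator {a..b} x * c)"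
    using borel_integrable_atLeastAtMost[of a b "\<lambda>x. c"] by (simp add: mult.commute)
  have "(LINT x|lborel. indicator {a..b} x * c) \<le> (LINT x|lborel. h x)"
    by (rule integral_mono[OF ii i]) (use nn lo in \<open>auto simp: indicator_def\<close>)
  then show ?thesis using ab by (simp add: mult.commute)
qed

definition J1 where "J1 = (LINT y|lborel. (gb' y)^2)"
definition J2 where "J2 = (LINT y|lborel. (gb y)^2)"
definition J3 where "J3 = (LINT y|lborel. (gb y)^3)"
definition J4 where "J4 = (LINT y|lborel. (gb y)^4)"

lemma gb_supp': "1 < \<bar>y\<bar> \<Longrightarrow> gb y = 0" "1 < \<bar>y\<bar> \<Longrightarrow> gb' y = 0" using gb_supp by auto

lemma i_gbk: "0 < k \<Longrightarrow> integrable lborel (\<lambda>y. (gb y)^k)"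
  by (rule int_ccs[where R=1]) (use gb_cont gb_supp' in \<open>auto intro!: continuous_intros\<close>)
lemma i_gb'2: "integrable lborel (\<lambda>y. (gb' y)^2)"
  by (rule int_ccs[where R=1]) (use gb'_cont gb_supp' in \<open>auto intro!: continuous_intros\<close>)

lemma J_pos: "0 \<le> J1" "0 < J2" "0 < J3" "0 < J4"
proof -
  show "0 \<le> J1" unfolding J1_def by simp
  have k: "0 < (LINT y|lborel. (gb y)^k)" if k0: "0 < k" for k
  proof -
    have "(9/16)^k * (1/2 - (-1/2)) \<le> (LINT y|lborel. (gb y)^k)"
    proof (rule int_lower[OF i_gbk[OF k0]])
      show "0 \<le> gb x ^ k" for x using gb_nn by simp
      show "(9/16)^k \<le> gb x ^ k" if "-1/2 \<le> x" "x \<le> 1/2" for x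
        by (rule power_mono) (use gb_big[of x] that in auto)
    qed auto
    moreover have "0 < (9/16::real)^k * (1/2 - (-1/2))" by simp
    ultimately show ?thesis by linarith
  qed
  show "0 < J2" "0 < J3" "0 < J4" unfolding J2_def J3_def J4_def using k by auto
qed


lemma gb_scaled_deriv:
  assumes L: "0 < L"
  shows "((\<lambda>x. gb ((x - D) / L)) has_real_derivative gb' ((x - D) / L) / L) (at x)"
proof -
  have "((\<lambda>x. (x - D) / L) has_real_derivative 1 / L) (at x)"
    using L by (auto intro!: derivative_eq_intros)
  from DERIV_chain2[OF gb_deriv this] show ?thesis by simp
qed

lemma gb_scaled_zero:
  assumes L: "0 < L" and x: "\<bar>D\<bar> + L < \<bar>x\<bar>"
  shows "gb ((x - D) / L) = 0" "gb' ((x - D) / L) = 0"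
proof -
  have "L < \<bar>x - D\<bar>" using x by linarith
  then have "1 < \<bar>(x - D) / L\<bar>" using L by (simp add: abs_divide)
  then show "gb ((x - D) / L) = 0" "gb' ((x - D) / L) = 0" using gb_supp' by auto
qed

lemma bump:
  fixes c D L :: real
  assumes L: "0 < L"
  shows "\<And>x. ((\<lambda>x. c * gb ((x - D) / L)) has_real_derivative c * gb' ((x - D) / L) / L) (at x)"
    and "continuous_on UNIV (\<lambda>x. c * gb ((x - D) / L))"
    and "continuous_on UNIV (\<lambda>x. c * gb' ((x - D) / L) / L)"
    and "\<And>x. \<bar>D\<bar> + L < \<bar>x\<bar> \<Longrightarrow> c * gb ((x - D) / L) = 0 \<and> c * gb' ((x - D) / L) / L = 0"
    and "(LINT x|lborel. (c * gb ((x - D) / L))^2) = c^2 * L * J2"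
    and "(LINT x|lborel. (c * gb' ((x - D) / L) / L)^2) = c^2 * J1 / L"
    and "(LINT x|lborel. (c * gb ((x - D) / L))^4) = c^4 * L * J4"
proof -
  show d: "((\<lambda>x. c * gb ((x - D) / L)) has_real_derivative c * gb' ((x - D) / L) / L) (at x)" for x
    using DERIV_cmult[OF gb_scaled_deriv[OF L, of D x], of c] by simp
  show "continuous_on UNIV (\<lambda>x. c * gb ((x - D) / L))"
    using d by (meson DERIV_continuous continuous_at_imp_continuous_on)
  have "continuous_on UNIV (\<lambda>x. gb' ((x - D) / L))"
    by (rule continuous_on_compose2[OF gb'_cont]) (use L in \<open>auto intro!: continuous_intros\<close>)
  then show "continuous_on UNIV (\<lambda>x. c * gb' ((x - D) / L) / L)"
    by (intro continuous_intros) (use L in auto)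
  show "\<And>x. \<bar>D\<bar> + L < \<bar>x\<bar> \<Longrightarrow> c * gb ((x - D) / L) = 0 \<and> c * gb' ((x - D) / L) / L = 0"
    using gb_scaled_zero[OF L] by simp
  have "(LINT x|lborel. (c * gb ((x - D) / L))^2) = (LINT x|lborel. c^2 * (gb ((x - D) / L))^2)"
    by (simp add: power_mult_distrib)
  also have "\<dots> = c^2 * (LINT x|lborel. (\<lambda>y. (gb y)^2) ((x - D) / L))" by simp
  also have "\<dots> = c^2 * (L * J2)" unfolding J2_def by (subst int_scale[OF L]) simp
  finally show "(LINT x|lborel. (c * gb ((x - D) / L))^2) = c^2 * L * J2" by simp
  have "(LINT x|lborel. (c * gb' ((x - D) / L) / L)^2) = (LINT x|lborel. (c^2 / L^2) * (gb' ((x - D) / L))^2)"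
    by (simp add: power_mult_distrib power_divide)
  also have "\<dots> = (c^2 / L^2) * (LINT x|lborel. (\<lambda>y. (gb' y)^2) ((x - D) / L))" by simp
  also have "\<dots> = (c^2 / L^2) * (L * J1)" unfolding J1_def by (subst int_scale[OF L]) simp
  finally show "(LINT x|lborel. (c * gb' ((x - D) / L) / L)^2) = c^2 * J1 / L"
    using L by (simp add: power2_eq_square field_simps)
  have "(LINT x|lborel. (c * gb ((x - D) / L))^4) = (LINT x|lborel. c^4 * (gb ((x - D) / L))^4)"
    by (simp add: power_mult_distrib)
  also have "\<dots> = c^4 * (LINT x|lborel. (\<lambda>y. (gb y)^4) ((x - D) / L))" by simp
  also have "\<dots> = c^4 * (L * J4)" unfolding J4_def by (subst int_scale[OF L]) simp
  finally show "(LINT x|lborel. (c * gb ((x - D) / L))^4) = c^4 * L * J4" by simp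
qed

lemma spread_cost:
  fixes M \<epsilon> \<beta> :: real
  assumes M: "0 \<le> M" and e: "0 < \<epsilon>" and b: "0 \<le> \<beta>"
  obtains Lv where "1 \<le> Lv"
    "(1/2) * (sqrt (M / (Lv * J2)))^2 * J1 / Lv + (\<beta>/4) * (sqrt (M / (Lv * J2)))^4 * Lv * J4 < \<epsilon>"
    "(sqrt (M / (Lv * J2)))^2 * Lv * J2 = M"
proof -
  note J = J_pos
  define K where "K = M * J1 / (2 * J2) + \<beta> * M^2 * J4 / (4 * J2^2)"
  have K0: "0 \<le> K" unfolding K_def using M b J by (intro add_nonneg_nonneg divide_nonneg_pos mult_nonneg_nonneg) auto
  define Lv where "Lv = K / \<epsilon> + 1"
  have L1: "1 \<le> Lv" unfolding Lv_def using K0 e by simp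
  have sq: "(sqrt (M / (Lv * J2)))^2 = M / (Lv * J2)" using M L1 J by simp
  have sq4: "(sqrt (M / (Lv * J2)))^4 = (M / (Lv * J2))^2"
    using sq by (metis power_mult numeral_Bit0 numeral_One mult_2 one_add_one power2_eq_square)
  have "(1/2) * (M / (Lv * J2)) * J1 / Lv + (\<beta>/4) * (M / (Lv * J2))^2 * Lv * J4
      = (M * J1 / (2 * J2)) / Lv^2 + (\<beta> * M^2 * J4 / (4 * J2^2)) / Lv"
    using L1 J by (simp add: power2_eq_square field_simps)
  also have "\<dots> \<le> (M * J1 / (2 * J2)) / Lv + (\<beta> * M^2 * J4 / (4 * J2^2)) / Lv"
  proof -
    have "Lv \<le> Lv^2" using L1 by (simp add: power2_eq_square)
    moreover have "0 \<le> M * J1 / (2 * J2)" using M J by simp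
    ultimately have "(M * J1 / (2 * J2)) / Lv^2 \<le> (M * J1 / (2 * J2)) / Lv"
      using L1 by (intro divide_left_mono) auto
    then show ?thesis by simp
  qed
  also have "\<dots> = K / Lv" unfolding K_def by (simp add: add_divide_distrib)
  also have "\<dots> < \<epsilon>"
  proof -
    have "K < \<epsilon> * Lv" unfolding Lv_def using e by (simp add: field_simps)
    then show ?thesis using L1 by (simp add: divide_less_eq)
  qed
  finally have "(1/2) * (M / (Lv * J2)) * J1 / Lv + (\<beta>/4) * (M / (Lv * J2))^2 * Lv * J4 < \<epsilon>" .
  then show ?thesis
    using that[OF L1] sq sq4 L1 J by simp
qed


lemma competitor1:
  assumes q: "0 < q" and m: "0 \<le> m" and a0: "0 \<le> \<alpha>" and b0: "0 \<le> \<beta>"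
  shows "\<exists>u v. (u, v) \<in> Xqm q m \<and> energy \<alpha> \<beta> u v < sqrt 2 * q"
proof -
  note J = J_pos
  define s where "s = sqrt 2"
  have s2: "s * s = 2" and s0: "0 < s" unfolding s_def by auto
  define a where "a = min (1/2) (4*q^2*J3/((J1+1)*J2^2))"
  have apos: "0 < a" unfolding a_def using q J by simp
  have ale: "a \<le> 1/2" unfolding a_def by simp
  have abd: "a \<le> 4*q^2*J3/((J1+1)*J2^2)" unfolding a_def by simp
  define b where "b = a * s / 2"
  define L where "L = 4 * q / (a^2 * s * J2)"
  have Lpos: "0 < L" unfolding L_def using q apos s0 J by simp
  define \<Delta> where "\<Delta> = a * s * q * J3 / (4 * J2)"
  have Dpos: "0 < \<Delta>" unfolding \<Delta>_def using apos s0 q J by simp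
  obtain Lv where Lv1: "1 \<le> Lv"
    and cost: "(1/2) * (sqrt (m / (Lv * J2)))^2 * J1 / Lv + (\<beta>/4) * (sqrt (m / (Lv * J2)))^4 * Lv * J4 < \<Delta>/2"
    and mass: "(sqrt (m / (Lv * J2)))^2 * Lv * J2 = m"
    using spread_cost[OF m _ b0, of "\<Delta>/2"] Dpos by auto
  have Lvpos: "0 < Lv" using Lv1 by simp
  define c where "c = sqrt (m / (Lv * J2))"
  define vc where "vc = (\<lambda>x. c * gb ((x - 0) / Lv))"
  define vc' where "vc' = (\<lambda>x. c * gb' ((x - 0) / Lv) / Lv)"
  note VB = bump[OF Lvpos, where c=c and D=0]
  define g where "g = (\<lambda>x. 1 * gb ((x - 0) / L))"
  define g' where "g' = (\<lambda>x. 1 * gb' ((x - 0) / L) / L)"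
  note GB = bump[OF Lpos, where c=1 and D=0]
  have g01: "0 \<le> g x" "g x \<le> 1" for x unfolding g_def using gb_nn gb_le1 by auto
  have pa: "1/2 \<le> 1 - a * g x" for x
  proof -
    have "a * g x \<le> 1/2 * 1" using ale g01[of x] apos by (intro mult_mono) auto
    then show ?thesis by simp
  qed
  define \<rho>c where "\<rho>c = (\<lambda>x. sqrt (1 - a * g x))"
  define \<rho>c' where "\<rho>c' = (\<lambda>x. - (a * g' x) / (2 * \<rho>c x))"
  define \<theta>c' where "\<theta>c' = (\<lambda>x. b * g x)"
  define \<theta>c where "\<theta>c = (\<lambda>y. integral {(-L)-1..y} \<theta>c')"
  define u where "u = (\<lambda>x. complex_of_real (\<rho>c x) * cis (\<theta>c x))"
  have \<rho>sq: "(\<rho>c x)^2 = 1 - a * g x" for x unfolding \<rho>c_def using pa[of x] by simp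
  have \<rho>pos: "0 < \<rho>c x" for x unfolding \<rho>c_def using pa[of x] by simp
  have \<rho>le1: "\<rho>c x \<le> 1" for x unfolding \<rho>c_def using g01[of x] apos by simp
  have cg: "continuous_on UNIV g" "continuous_on UNIV g'" using GB(2,3) unfolding g_def g'_def by auto
  have dg: "(g has_real_derivative g' x) (at x)" for x using GB(1) unfolding g_def g'_def by blast
  have d\<rho>: "(\<rho>c has_real_derivative \<rho>c' x) (at x)" for x
  proof -
    have df: "((\<lambda>x. 1 - a * g x) has_real_derivative - (a * g' x)) (at x)"
      by (auto intro!: derivative_eq_intros dg)
    have "((\<lambda>x. sqrt (1 - a * g x)) has_real_derivative inverse (sqrt (1 - a * g x)) / 2 * (- (a * g' x))) (at x)"
      by (rule DERIV_chain2[OF DERIV_real_sqrt df]) (use pa[of x] in simp)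
    moreover have "inverse (sqrt (1 - a * g x)) / 2 * (- (a * g' x)) = \<rho>c' x"
      unfolding \<rho>c'_def \<rho>c_def by (simp add: field_simps)
    ultimately show ?thesis unfolding \<rho>c_def by simp
  qed
  have c\<rho>: "continuous_on UNIV \<rho>c" unfolding \<rho>c_def using cg by (intro continuous_intros)
  have c\<rho>': "continuous_on UNIV \<rho>c'" unfolding \<rho>c'_def
    using cg c\<rho> \<rho>pos by (intro continuous_intros) (auto simp: less_imp_neq[symmetric])
  have c\<theta>': "continuous_on UNIV \<theta>c'" unfolding \<theta>c'_def using cg by (intro continuous_intros)
  have gz: "L < \<bar>x\<bar> \<Longrightarrow> g x = 0 \<and> g' x = 0" for x using GB(4)[of x] unfolding g_def g'_def by simp
  have d\<theta>: "(\<theta>c has_real_derivative \<theta>c' x) (at x)" for x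
    unfolding \<theta>c_def
  proof (rule prim_deriv[OF c\<theta>'])
    fix y :: real assume "y < - L"
    then have "L < \<bar>y\<bar>" by simp
    then show "\<theta>c' y = 0" unfolding \<theta>c'_def using gz by simp
  qed
  have dv: "(vc has_real_derivative vc' x) (at x)" for x using VB(1) unfolding vc_def vc'_def by blast
  have cv': "continuous_on UNIV vc'" using VB(3) unfolding vc'_def by simp
  define R where "R = max L Lv"
  have supp: "R < \<bar>x\<bar> \<Longrightarrow> \<rho>c x = 1 \<and> \<rho>c' x = 0 \<and> \<theta>c' x = 0 \<and> vc x = 0 \<and> vc' x = 0" for x
    using gz[of x] VB(4)[of x] unfolding R_def \<rho>c_def \<rho>c'_def \<theta>c'_def vc_def vc'_def by auto
  have lt2: "\<rho>c x < 2" for x using \<rho>le1[of x] by simp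
  note M = master[where R=R, OF d\<rho> d\<theta> dv c\<rho>' c\<theta>' cv' \<rho>pos lt2 supp u_def]
  have D: "dat \<rho>c \<rho>c' \<theta>c' vc vc' R"
  proof
    show "0 \<le> \<theta>c' x" for x unfolding \<theta>c'_def b_def using apos s0 g01[of x] by simp
  qed (use d\<rho> dv c\<rho>' c\<theta>' cv' \<rho>pos \<rho>le1 supp in auto)
  have Geq: "G \<bar>1 - \<rho>c x\<bar> * \<theta>c' x = (a * b) * (g x)^2" for x
  proof -
    have "G \<bar>1 - \<rho>c x\<bar> = 1 - (\<rho>c x)^2"
      using \<rho>le1[of x] unfolding G_def by (simp add: power2_eq_square algebra_simps)
    then show ?thesis unfolding \<theta>c'_def \<rho>sq by (simp add: power2_eq_square)
  qed
  have ig2: "(LINT x|lborel. (g x)^2) = L * J2" using GB(5) unfolding g_def by simp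
  have ig'2: "(LINT x|lborel. (g' x)^2) = J1 / L" using GB(6) unfolding g'_def by simp
  have ig3: "(LINT x|lborel. (g x)^3) = L * J3"
    unfolding g_def J3_def using int_scale[OF Lpos, of "\<lambda>y. (gb y)^3" 0] by simp
  have mom: "momentum u = q"
  proof -
    have "momentum u = (1/2) * (LINT x|lborel. (a * b) * (g x)^2)" using M(2) Geq by simp
    also have "\<dots> = (1/2) * (a * b) * (L * J2)" using ig2 by simp
    also have "\<dots> = q" unfolding b_def L_def using apos s0 J by (simp add: field_simps power2_eq_square)
    finally show ?thesis .
  qed
  have L2v: "L2norm vc ^ 2 = m"
    using M(3) VB(5) mass unfolding vc_def c_def by simp
  have inX: "(u, vc) \<in> Xqm q m" unfolding Xqm_def using M(1) mom L2v by simp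
  define B where "B = (\<lambda>x. (a^2/4) * (g' x)^2 + (b^2/2 + a^2/4) * (g x)^2 - (a * b^2 / 2) * (g x)^3
                       + (1/2) * (vc' x)^2 + (\<beta>/4) * (vc x)^4)"
  have iB: "integrable lborel B"
    unfolding B_def by (rule int_ccs[where R=R])
      (use supp gz cg dat.cv[OF D] cv' in \<open>auto intro!: continuous_intros simp: R_def\<close>)
  have pw: "eint \<alpha> \<beta> (\<rho>c x) (\<rho>c' x) (\<theta>c' x) (vc x) (vc' x) \<le> B x" for x
  proof -
    define G0 where "G0 = g x"
    define G1 where "G1 = g' x"
    define r where "r = \<rho>c x"
    have r2: "r^2 = 1 - a * G0" unfolding r_def G0_def by (rule \<rho>sq)
    have rpos: "0 < r" unfolding r_def by (rule \<rho>pos)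
    have r2h: "1/2 \<le> r^2" using r2 pa[of x] unfolding G0_def by simp
    have A1: "(\<rho>c' x)^2 \<le> a^2 * G1^2 / 2"
    proof -
      have "(\<rho>c' x)^2 = a^2 * G1^2 / (4 * r^2)"
        unfolding \<rho>c'_def r_def G1_def by (simp add: power2_eq_square field_simps)
      also have "\<dots> \<le> a^2 * G1^2 / (4 * (1/2))"
        using r2h by (intro divide_left_mono mult_left_mono) auto
      finally show ?thesis by simp
    qed
    have A2: "(r * \<theta>c' x)^2 = (1 - a * G0) * b^2 * G0^2"
      unfolding \<theta>c'_def G0_def[symmetric] by (simp add: power_mult_distrib r2)
    have A3: "(1 - r^2)^2 = a^2 * G0^2" using r2 by (simp add: power_mult_distrib)
    have A4: "0 \<le> (\<alpha>/2) * (1 - r^2) * (vc x)^2"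
      using r2 apos a0 g01[of x] unfolding G0_def by simp
    have "eint \<alpha> \<beta> (\<rho>c x) (\<rho>c' x) (\<theta>c' x) (vc x) (vc' x)
        = (1/2) * (\<rho>c' x)^2 + (1/2) * (r * \<theta>c' x)^2 + (1/2) * (vc' x)^2 + (1/4) * (1 - r^2)^2
          + (\<beta>/4) * (vc x)^4 - (\<alpha>/2) * (1 - r^2) * (vc x)^2"
      unfolding eint_def r_def by (simp add: algebra_simps)
    also have "\<dots> \<le> (1/2) * (a^2 * G1^2 / 2) + (1/2) * ((1 - a * G0) * b^2 * G0^2) + (1/2) * (vc' x)^2
          + (1/4) * (a^2 * G0^2) + (\<beta>/4) * (vc x)^4"
      unfolding A2 A3 using A1 A4 by linarith
    also have "\<dots> = B x"
      unfolding B_def G0_def G1_def by (simp add: power2_eq_square power3_eq_cube algebra_simps)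
    finally show ?thesis .
  qed
  have ien: "(LINT x|lborel. eint \<alpha> \<beta> (\<rho>c x) (\<rho>c' x) (\<theta>c' x) (vc x) (vc' x)) \<le> (LINT x|lborel. B x)"
    by (rule integral_mono[OF dat.i_e[OF D] iB pw])
  have ig2': "integrable lborel (\<lambda>x. (g' x)^2)" "integrable lborel (\<lambda>x. (g x)^2)" "integrable lborel (\<lambda>x. (g x)^3)"
    "integrable lborel (\<lambda>x. (vc' x)^2)" "integrable lborel (\<lambda>x. (vc x)^4)"
    by (rule int_ccs[where R=R]; use supp gz cg dat.cv[OF D] cv' in \<open>auto intro!: continuous_intros simp: R_def\<close>)+
  have iBv: "(LINT x|lborel. B x) = (a^2/4) * (J1 / L) + (b^2/2 + a^2/4) * (L * J2) - (a * b^2 / 2) * (L * J3)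
       + (1/2) * (c^2 * J1 / Lv) + (\<beta>/4) * (c^4 * Lv * J4)"
  proof -
    have "(LINT x|lborel. B x) = (a^2/4) * (LINT x|lborel. (g' x)^2) + (b^2/2 + a^2/4) * (LINT x|lborel. (g x)^2)
       - (a * b^2 / 2) * (LINT x|lborel. (g x)^3) + (1/2) * (LINT x|lborel. (vc' x)^2) + (\<beta>/4) * (LINT x|lborel. (vc x)^4)"
      unfolding B_def using ig2' by simp
    also have "\<dots> = (a^2/4) * (J1 / L) + (b^2/2 + a^2/4) * (L * J2) - (a * b^2 / 2) * (L * J3)
       + (1/2) * (c^2 * J1 / Lv) + (\<beta>/4) * (c^4 * Lv * J4)"
      using ig2 ig'2 ig3 VB(6,7) unfolding vc_def vc'_def by simp
    finally show ?thesis .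
  qed
  have T1: "(a^2/4) * (J1 / L) \<le> \<Delta>"
  proof -
    have e1: "(a^2/4) * (J1 / L) = a^4 * s * J1 * J2 / (16 * q)"
      unfolding L_def using apos s0 q J by (simp add: field_simps power2_eq_square power4_eq_xxxx)
    have Y: "0 < (J1+1)*J2^2" using J by simp
    have h1: "a * ((J1 + 1) * J2^2) \<le> 4*q^2*J3" using abd Y by (simp add: pos_le_divide_eq)
    have h2: "a * J1 * J2^2 \<le> a * ((J1 + 1) * J2^2)"
    proof -
      have "0 \<le> a * J2^2" using apos by simp
      then show ?thesis by (simp add: algebra_simps)
    qed
    from h1 h2 have "a * J1 * J2^2 \<le> 4*q^2*J3" by linarith
    moreover have "a^3 * J1 * J2^2 \<le> a * J1 * J2^2"
    proof -
      have "a * a \<le> 1 * 1" using apos ale by (intro mult_mono) auto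
      then have "a * (a * a) \<le> a * 1" using apos by (intro mult_left_mono) auto
      then have "a^3 \<le> a" by (simp add: power3_eq_cube)
      then show ?thesis using J by (intro mult_right_mono) auto
    qed
    ultimately have k: "a^3 * J1 * J2^2 \<le> 4*q^2*J3" by linarith
    have "a^4 * s * J1 * J2 / (16 * q) = (a * s / (16 * q * J2)) * (a^3 * J1 * J2^2)"
      using q J by (simp add: field_simps power2_eq_square power3_eq_cube power4_eq_xxxx)
    also have "\<dots> \<le> (a * s / (16 * q * J2)) * (4*q^2*J3)"
      using k apos s0 q J by (intro mult_left_mono) auto
    also have "\<dots> = \<Delta>" unfolding \<Delta>_def using q J by (simp add: field_simps power2_eq_square)
    finally show ?thesis using e1 by simp
  qed
  have T2: "(b^2/2 + a^2/4) * (L * J2) = s * q"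
    unfolding b_def L_def using apos s0 J q s2 by (simp add: field_simps power2_eq_square)
  have T3: "(a * b^2 / 2) * (L * J3) = 2 * \<Delta>"
    unfolding b_def L_def \<Delta>_def using apos s0 J q s2 by (simp add: field_simps power2_eq_square)
  have Cv: "(1/2) * (c^2 * J1 / Lv) + (\<beta>/4) * (c^4 * Lv * J4) < \<Delta>/2"
    using cost unfolding c_def by (simp add: algebra_simps)
  have "energy \<alpha> \<beta> u vc < s * q"
    using M(4)[of \<alpha> \<beta>] ien iBv T1 T2 T3 Cv Dpos by linarith
  then show ?thesis using inX unfolding s_def by blast
qed


lemma competitor2:
  assumes m: "0 < m" and b0: "0 \<le> \<beta>" and \<kappa>: "0 < \<kappa>" and r: "0 < r"
  obtains w w' Rw \<gamma> where
   "\<And>x. (w has_real_derivative w' x) (at x)" "continuous_on UNIV w'"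
   "\<And>x. Rw < \<bar>x\<bar> \<Longrightarrow> w x = 0 \<and> w' x = 0"
   "(LINT x|lborel. (w x)^2) = m"
   "0 < \<gamma>" "\<And>x. \<bar>x\<bar> \<le> r \<Longrightarrow> \<gamma> \<le> (w x)^2"
   "(1/2) * (LINT x|lborel. (w' x)^2) + (\<beta>/4) * (LINT x|lborel. (w x)^4) \<le> \<kappa> * r * \<gamma>"
proof -
  note J = J_pos
  define G0 where "G0 = \<kappa> * r * (81/256)"
  have G0: "0 < G0" unfolding G0_def using \<kappa> r by simp
  define L1 where "L1 = max (2 * r) (2 * J1 / G0 + 1)"
  have L1p: "0 < L1" and L1r: "2 * r \<le> L1" and L1J: "2 * J1 / G0 \<le> L1" unfolding L1_def using r by auto
  define A where "A = min (m / (2 * L1 * J2)) (G0 / (\<beta> * L1 * J4 + 1))"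
  have den: "0 < \<beta> * L1 * J4 + 1" using b0 L1p J by (simp add: add_nonneg_pos)
  have Ap: "0 < A" unfolding A_def using m L1p J G0 den by simp
  have Am: "A \<le> m / (2 * L1 * J2)" and AG: "A \<le> G0 / (\<beta> * L1 * J4 + 1)" unfolding A_def by auto
  have AmL: "A * L1 * J2 \<le> m / 2"
  proof -
    have "A * (2 * L1 * J2) \<le> m" using Am L1p J by (simp add: pos_le_divide_eq)
    then show ?thesis by simp
  qed
  define M2 where "M2 = m - A * L1 * J2"
  have M2: "0 \<le> M2" unfolding M2_def using AmL m by simp
  have eps: "0 < A * G0 / 2" using Ap G0 by simp
  obtain L2 where L21: "1 \<le> L2"
    and cost2: "(1/2) * (sqrt (M2 / (L2 * J2)))^2 * J1 / L2 + (\<beta>/4) * (sqrt (M2 / (L2 * J2)))^4 * L2 * J4 < A * G0 / 2"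
    and mass2: "(sqrt (M2 / (L2 * J2)))^2 * L2 * J2 = M2"
    using spread_cost[OF M2 eps b0] by blast
  have L2p: "0 < L2" using L21 by simp
  define a1 where "a1 = sqrt A"
  have a1sq: "a1^2 = A" unfolding a1_def using Ap by simp
  have a14: "a1^4 = A^2" using a1sq by (metis power_mult numeral_Bit0 mult_2 one_add_one power2_eq_square numeral_One)
  define c2 where "c2 = sqrt (M2 / (L2 * J2))"
  define D where "D = L1 + L2 + 1"
  define w1 where "w1 = (\<lambda>x. a1 * gb ((x - 0) / L1))"
  define w1' where "w1' = (\<lambda>x. a1 * gb' ((x - 0) / L1) / L1)"
  define w2 where "w2 = (\<lambda>x. c2 * gb ((x - D) / L2))"
  define w2' where "w2' = (\<lambda>x. c2 * gb' ((x - D) / L2) / L2)"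
  note B1 = bump[OF L1p, where c=a1 and D=0]
  note B2 = bump[OF L2p, where c=c2 and D=D]
  have z1: "w1 x = 0 \<and> w1' x = 0" if "L1 \<le> \<bar>x\<bar>" for x
  proof -
    have "1 \<le> \<bar>(x - 0) / L1\<bar>" using that L1p by (simp add: abs_divide)
    then show ?thesis unfolding w1_def w1'_def using gb_supp by auto
  qed
  have z2: "w2 x = 0 \<and> w2' x = 0" if "\<bar>x - D\<bar> \<ge> L2" for x
  proof -
    have "1 \<le> \<bar>(x - D) / L2\<bar>" using that L2p by (simp add: abs_divide)
    then show ?thesis unfolding w2_def w2'_def using gb_supp by auto
  qed
  have disj: "(w1 x = 0 \<and> w1' x = 0) \<or> (w2 x = 0 \<and> w2' x = 0)" for x
  proof (cases "L1 \<le> \<bar>x\<bar>")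
    case True then show ?thesis using z1 by blast
  next
    case False
    then have "\<bar>x - D\<bar> \<ge> L2" unfolding D_def by linarith
    then show ?thesis using z2 by blast
  qed
  define w where "w = (\<lambda>x. w1 x + w2 x)"
  define w' where "w' = (\<lambda>x. w1' x + w2' x)"
  have sq2: "(w x)^2 = (w1 x)^2 + (w2 x)^2" for x using disj[of x] unfolding w_def by auto
  have sq4: "(w x)^4 = (w1 x)^4 + (w2 x)^4" for x using disj[of x] unfolding w_def by auto
  have sq2': "(w' x)^2 = (w1' x)^2 + (w2' x)^2" for x using disj[of x] unfolding w'_def by auto
  have i1: "integrable lborel (\<lambda>x. (w1 x)^k)" "integrable lborel (\<lambda>x. (w1' x)^k)" if "0 < k" for k
    using B1(2,3,4) that unfolding w1_def w1'_def
    by (auto intro!: int_ccs[where R="\<bar>0\<bar> + L1"] continuous_intros)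
  have i2: "integrable lborel (\<lambda>x. (w2 x)^k)" "integrable lborel (\<lambda>x. (w2' x)^k)" if "0 < k" for k
    using B2(2,3,4) that unfolding w2_def w2'_def
    by (auto intro!: int_ccs[where R="\<bar>D\<bar> + L2"] continuous_intros)
  show ?thesis
  proof (rule that[of w w' "\<bar>D\<bar> + L2" "A * (81/256)"])
    show "(w has_real_derivative w' x) (at x)" for x
    proof -
      have d1: "(w1 has_real_derivative w1' x) (at x)" using B1(1) unfolding w1_def w1'_def by blast
      have d2: "(w2 has_real_derivative w2' x) (at x)" using B2(1) unfolding w2_def w2'_def by blast
      show ?thesis using DERIV_add[OF d1 d2] unfolding w_def w'_def by simp
    qed
    show "continuous_on UNIV w'"
    proof -
      have "continuous_on UNIV w1'" using B1(3) unfolding w1'_def .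
      moreover have "continuous_on UNIV w2'" using B2(3) unfolding w2'_def .
      ultimately show ?thesis unfolding w'_def by (intro continuous_intros)
    qed
    show "\<bar>D\<bar> + L2 < \<bar>x\<bar> \<Longrightarrow> w x = 0 \<and> w' x = 0" for x
    proof -
      assume a: "\<bar>D\<bar> + L2 < \<bar>x\<bar>"
      have "L1 \<le> \<bar>x\<bar>" using a L2p unfolding D_def using L1p by linarith
      moreover have "\<bar>x - D\<bar> \<ge> L2" using a by linarith
      ultimately show ?thesis using z1 z2 unfolding w_def w'_def by auto
    qed
    show "(LINT x|lborel. (w x)^2) = m"
    proof -
      have "(LINT x|lborel. (w x)^2) = (LINT x|lborel. (w1 x)^2) + (LINT x|lborel. (w2 x)^2)"
        unfolding sq2 using i1(1)[of 2] i2(1)[of 2] by simp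
      also have "\<dots> = A * L1 * J2 + M2"
        using B1(5) B2(5) mass2 a1sq unfolding w1_def w2_def c2_def by simp
      finally show ?thesis unfolding M2_def by simp
    qed
    show "0 < A * (81/256)" using Ap by simp
    show "A * (81/256) \<le> (w x)^2" if "\<bar>x\<bar> \<le> r" for x
    proof -
      have "\<bar>x - D\<bar> \<ge> L2" using that L1r r unfolding D_def by linarith
      then have w2z: "w2 x = 0" using z2 by blast
      have "\<bar>(x - 0) / L1\<bar> \<le> 1/2" using that L1r L1p r by (simp add: abs_divide divide_le_eq)
      then have gb: "9/16 \<le> gb ((x - 0) / L1)" by (rule gb_big)
      have "(9/16)^2 \<le> (gb ((x - 0) / L1))^2" by (rule power_mono[OF gb]) simp
      then have "A * (9/16)^2 \<le> A * (gb ((x - 0) / L1))^2" using Ap by (intro mult_left_mono) auto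
      moreover have "(w x)^2 = A * (gb ((x - 0) / L1))^2"
        unfolding sq2 w2z w1_def using a1sq by (simp add: power_mult_distrib)
      ultimately show ?thesis by (simp add: power2_eq_square)
    qed
    show "(1/2) * (LINT x|lborel. (w' x)^2) + (\<beta>/4) * (LINT x|lborel. (w x)^4) \<le> \<kappa> * r * (A * (81/256))"
    proof -
      have e2: "(LINT x|lborel. (w' x)^2) = A * J1 / L1 + c2^2 * J1 / L2"
        unfolding sq2' using i1(2)[of 2] i2(2)[of 2] B1(6) B2(6) a1sq unfolding w1'_def w2'_def by simp
      have e4: "(LINT x|lborel. (w x)^4) = A^2 * L1 * J4 + c2^4 * L2 * J4"
        unfolding sq4 using i1(1)[of 4] i2(1)[of 4] B1(7) B2(7) a14 unfolding w1_def w2_def by simp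
      have t1: "(1/2) * (A * J1 / L1) \<le> A * G0 / 4"
      proof -
        have "J1 / L1 \<le> G0 / 2"
        proof -
          have "2 * J1 \<le> L1 * G0" using L1J G0 by (simp add: divide_le_eq)
          then show ?thesis using L1p by (simp add: divide_le_eq mult.commute)
        qed
        then have "A * (J1 / L1) \<le> A * (G0 / 2)" using Ap by (intro mult_left_mono) auto
        then show ?thesis by (simp add: mult.commute mult.left_commute)
      qed
      have t2: "(\<beta>/4) * (A^2 * L1 * J4) \<le> A * G0 / 4"
      proof -
        have "A * (\<beta> * L1 * J4 + 1) \<le> G0" using AG den by (simp add: pos_le_divide_eq)
        then have "A * (\<beta> * L1 * J4) \<le> G0" using Ap by (simp add: algebra_simps)
        then have "A * (A * (\<beta> * L1 * J4)) \<le> A * G0" using Ap by (intro mult_left_mono) auto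
        then show ?thesis by (simp add: power2_eq_square algebra_simps)
      qed
      have t3: "(1/2) * (c2^2 * J1 / L2) + (\<beta>/4) * (c2^4 * L2 * J4) < A * G0 / 2"
        using cost2 unfolding c2_def by (simp add: algebra_simps)
      have "(1/2) * (LINT x|lborel. (w' x)^2) + (\<beta>/4) * (LINT x|lborel. (w x)^4)
         = (1/2) * (A * J1 / L1) + (\<beta>/4) * (A^2 * L1 * J4) + ((1/2) * (c2^2 * J1 / L2) + (\<beta>/4) * (c2^4 * L2 * J4))"
        unfolding e2 e4 by (simp add: algebra_simps)
      also have "\<dots> \<le> A * G0" using t1 t2 t3 by linarith
      also have "\<dots> = \<kappa> * r * (A * (81/256))" unfolding G0_def by simp
      finally show ?thesis .
    qed
  qed
qed


lemma perA:
  fixes u :: "real \<Rightarrow> complex" and v :: "real \<Rightarrow> real"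
  assumes a: "0 < \<alpha>" and b: "0 \<le> \<beta>" and mem: "(u, v) \<in> X0qm q m" and q: "0 < q" and m: "0 \<le> m"
    and Ec: "energy \<alpha> \<beta> u v < c" and c: "c < sqrt 2 * q"
    and K: "K = sqrt 2 * q + \<alpha> * m / 2" and S: "s0 = (sqrt 2 * q - c) / (sqrt 2 * q + \<alpha> * m)"
  shows "sqrt (s0^4 / (16 * K)) < L2norm (deriv (\<lambda>x. cmod (u x)))"
    and "\<And>x. \<bar>x\<bar> \<le> s0^2 / (8 * K) \<Longrightarrow> s0 / 2 \<le> 1 - cmod (u x)"
    and "(LINT x|lborel. (1 - (cmod (u x))^2)^2) \<le> 4 * K"
proof -
  obtain \<theta> \<theta>' R where F1: "dat (\<lambda>x. cmod (u x)) (deriv (\<lambda>x. cmod (u x))) \<theta>' v (deriv v) R"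
    and F2: "\<And>x. cmod (u 0) \<le> cmod (u x)"
    and F3: "\<And>x y. 0 \<le> x \<Longrightarrow> x \<le> y \<Longrightarrow> cmod (u x) \<le> cmod (u y)"
    and F4: "\<And>x. cmod (u (-x)) = cmod (u x)"
    and F5: "q = (1/2) * (LINT x|lborel. (1 - (cmod (u x))^2) * \<theta>' x)"
    and F6: "m = (LINT x|lborel. (v x)^2)"
    and F7: "\<And>\<alpha> \<beta>. energy \<alpha> \<beta> u v = (LINT x|lborel. eint \<alpha> \<beta> (cmod (u x)) (deriv (\<lambda>x. cmod (u x)) x) (\<theta>' x) (v x) (deriv v x))"
    using X0_facts[OF mem] by blast
  define \<rho> where "\<rho> = (\<lambda>x. cmod (u x))"
  define \<rho>' where "\<rho>' = deriv \<rho>"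
  interpret D: dat \<rho> \<rho>' \<theta>' v "deriv v" R using F1 unfolding \<rho>_def \<rho>'_def .
  define E where "E = energy \<alpha> \<beta> u v"
  have Ee: "E = (LINT x|lborel. eint \<alpha> \<beta> (\<rho> x) (\<rho>' x) (\<theta>' x) (v x) (deriv v x))"
    unfolding E_def F7 \<rho>_def \<rho>'_def ..
  define sn where "sn = 1 - \<rho> 0"
  define I2 where "I2 = (LINT x|lborel. (1 - (\<rho> x)^2)^2)"
  define B where "B = (LINT x|lborel. (\<rho>' x)^2)"
  have Kp: "0 < K" unfolding K using q a m by (simp add: add_pos_nonneg)
  have Yp: "0 < sqrt 2 * q + \<alpha> * m" using q a m by (simp add: add_pos_nonneg)
  have s0p: "0 < s0" unfolding S using c Yp by simp
  have l1: "sqrt 2 * \<rho> 0 * q - \<alpha> * sn * m \<le> E"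
    using D.L1[OF less_imp_le[OF a] b] F2 unfolding Ee F5[folded \<rho>_def] F6 sn_def \<rho>_def by simp
  have "sqrt 2 * \<rho> 0 * q = sqrt 2 * q - sn * (sqrt 2 * q)" unfolding sn_def by (simp add: algebra_simps)
  moreover have "\<alpha> * sn * m = sn * (\<alpha> * m)" by simp
  ultimately have "sqrt 2 * q - c < sn * (sqrt 2 * q) + sn * (\<alpha> * m)" using l1 Ec unfolding E_def by linarith
  then have "sqrt 2 * q - c < sn * (sqrt 2 * q + \<alpha> * m)" by (simp add: algebra_simps)
  then have sns: "s0 < sn" unfolding S using Yp by (simp add: divide_less_eq)
  have l2: "(1/4) * I2 \<le> E + (\<alpha>/2) * m" "(1/2) * B \<le> E + (\<alpha>/2) * m"
    using D.L2[OF less_imp_le[OF a] b] unfolding I2_def B_def Ee F6 by auto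
  have EK: "E + (\<alpha>/2) * m < K" using Ec c unfolding K E_def by simp
  have I2K: "I2 \<le> 4 * K" using l2(1) EK by linarith
  have BK: "B < 2 * K" using l2(2) EK by linarith
  show "(LINT x|lborel. (1 - (cmod (u x))^2)^2) \<le> 4 * K" using I2K unfolding I2_def \<rho>_def .
  define t where "t = s0^2 / (8 * K)"
  have tp: "0 < t" unfolding t_def using s0p Kp by simp
  have l3: "sn^2 \<le> t * I2 + (1/t) * B" using D.L3[OF tp] unfolding sn_def I2_def B_def .
  have "t * I2 \<le> t * (4 * K)" using I2K tp by (intro mult_left_mono) auto
  also have "t * (4 * K) = s0^2 / 2" unfolding t_def using Kp by (simp add: field_simps)
  finally have tI: "t * I2 \<le> s0^2 / 2" .
  have "s0^2 < sn^2" using sns s0p by (intro power_strict_mono) auto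
  then have "s0^2 / 2 < (1/t) * B" using l3 tI by linarith
  then have "s0^2 / 2 * t < B" using tp by (simp add: field_simps)
  moreover have "s0^2 / 2 * t = s0^4 / (16 * K)" unfolding t_def using Kp by (simp add: field_simps power4_eq_xxxx power2_eq_square)
  ultimately have "s0^4 / (16 * K) < B" by simp
  moreover have "L2norm (deriv (\<lambda>x. cmod (u x))) = sqrt B"
    unfolding L2norm_def B_def \<rho>'_def \<rho>_def by simp
  ultimately show "sqrt (s0^4 / (16 * K)) < L2norm (deriv (\<lambda>x. cmod (u x)))" by simp
  define r where "r = s0^2 / (8 * K)"
  define t2 where "t2 = 4 * K / s0"
  have t2p: "0 < t2" unfolding t2_def using Kp s0p by simp
  have rp: "0 \<le> r" unfolding r_def using Kp by simp
  have l4: "sn - (t2 * r + (1/t2) * B) / 2 \<le> 1 - \<rho> r" using D.L4[OF t2p rp] unfolding sn_def B_def .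
  have tr: "t2 * r = s0 / 2" unfolding t2_def r_def using Kp s0p by (simp add: field_simps power2_eq_square)
  have "(1/t2) * B \<le> (1/t2) * (2 * K)" using BK t2p by (intro mult_left_mono) auto
  also have "(1/t2) * (2 * K) = s0 / 2" unfolding t2_def using Kp s0p by (simp add: field_simps)
  finally have tB: "(1/t2) * B \<le> s0 / 2" .
  have "(t2 * r + (1/t2) * B) / 2 \<le> s0 / 2" using tr tB by simp
  then have \<rho>r: "s0 / 2 \<le> 1 - \<rho> r" using l4 sns by linarith
  show "s0 / 2 \<le> 1 - cmod (u x)" if "\<bar>x\<bar> \<le> s0^2 / (8 * K)" for x
  proof -
    have "\<rho> \<bar>x\<bar> \<le> \<rho> r" using F3[of "\<bar>x\<bar>" r] that unfolding \<rho>_def r_def by simp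
    moreover have "\<rho> \<bar>x\<bar> = \<rho> x" using F4[of x] unfolding \<rho>_def by (cases "0 \<le> x") auto
    ultimately show ?thesis using \<rho>r unfolding \<rho>_def by simp
  qed
qed

lemma perC:
  fixes u :: "real \<Rightarrow> complex" and v :: "real \<Rightarrow> real"
  assumes a: "0 \<le> \<alpha>" and b: "0 \<le> \<beta>" and mem: "(u, v) \<in> X0qm q m"
  shows "- (\<alpha>/2) * m \<le> energy \<alpha> \<beta> u v"
proof -
  obtain \<theta> \<theta>' R where F1: "dat (\<lambda>x. cmod (u x)) (deriv (\<lambda>x. cmod (u x))) \<theta>' v (deriv v) R"
    and F6: "m = (LINT x|lborel. (v x)^2)"
    and F7: "\<And>\<alpha> \<beta>. energy \<alpha> \<beta> u v = (LINT x|lborel. eint \<alpha> \<beta> (cmod (u x)) (deriv (\<lambda>x. cmod (u x)) x) (\<theta>' x) (v x) (deriv v x))"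
    using X0_facts[OF mem] by blast
  interpret D: dat "\<lambda>x. cmod (u x)" "deriv (\<lambda>x. cmod (u x))" \<theta>' v "deriv v" R using F1 .
  have z: "0 \<le> (LINT x|lborel. (1 - (cmod (u x))^2)^2)" by simp
  have "(1/4) * (LINT x|lborel. (1 - (cmod (u x))^2)^2) \<le> energy \<alpha> \<beta> u v + (\<alpha>/2) * m"
    using D.L2(1)[OF a b] unfolding F7[symmetric] F6[symmetric] .
  with z show ?thesis by linarith
qed


lemma perB:
  fixes u :: "real \<Rightarrow> complex" and v w w' :: "real \<Rightarrow> real"
  assumes a: "0 < \<alpha>" and b: "0 \<le> \<beta>" and mem: "(u, v) \<in> X0qm q m" and q: "0 < q" and m: "0 \<le> m"
    and Ec: "energy \<alpha> \<beta> u v < c" and c: "c < sqrt 2 * q"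
    and K: "K = sqrt 2 * q + \<alpha> * m / 2" and S: "s0 = (sqrt 2 * q - c) / (sqrt 2 * q + \<alpha> * m)"
    and dw: "\<And>x. (w has_real_derivative w' x) (at x)" and cw': "continuous_on UNIV w'"
    and sw: "\<And>x. Rw < \<bar>x\<bar> \<Longrightarrow> w x = 0 \<and> w' x = 0"
    and mw: "(LINT x|lborel. (w x)^2) = m" and gam: "0 < \<gamma>"
    and gw: "\<And>x. \<bar>x\<bar> \<le> r0 \<Longrightarrow> \<gamma> \<le> (w x)^2"
    and cw: "(1/2) * (LINT x|lborel. (w' x)^2) + (\<beta>/4) * (LINT x|lborel. (w x)^4) \<le> \<kappa> * r0 * \<gamma>"
    and r0: "r0 = s0^2 / (8 * K)" and \<kappa>: "\<kappa> = \<alpha> * s0 / 4" and t: "0 < t"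
  shows "Emin \<alpha> \<beta> q m \<le> ereal (energy \<alpha> \<beta> u v + (\<alpha>/4) * (4 * K * t + (LINT x|lborel. (v x)^4) / t) - \<kappa> * r0 * \<gamma>)"
proof -
  obtain \<theta> \<theta>' R where F1: "dat (\<lambda>x. cmod (u x)) (deriv (\<lambda>x. cmod (u x))) \<theta>' v (deriv v) R"
    and F7: "\<And>\<alpha> \<beta>. energy \<alpha> \<beta> u v = (LINT x|lborel. eint \<alpha> \<beta> (cmod (u x)) (deriv (\<lambda>x. cmod (u x)) x) (\<theta>' x) (v x) (deriv v x))"
    and F8: "\<And>x. (\<theta> has_real_derivative \<theta>' x) (at x)"
    and F9: "u = (\<lambda>x. complex_of_real (cmod (u x)) * cis (\<theta> x))"
    and F10: "(u, v) \<in> Xqm q m"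
    using X0_facts[OF mem] by blast
  define \<rho> where "\<rho> = (\<lambda>x. cmod (u x))"
  define \<rho>' where "\<rho>' = deriv \<rho>"
  interpret D1: dat \<rho> \<rho>' \<theta>' v "deriv v" R using F1 unfolding \<rho>_def \<rho>'_def .
  define R2 where "R2 = max R Rw"
  have supp2: "R2 < \<bar>x\<bar> \<Longrightarrow> \<rho> x = 1 \<and> \<rho>' x = 0 \<and> \<theta>' x = 0 \<and> w x = 0 \<and> w' x = 0" for x
    using D1.supp[of x] sw[of x] unfolding R2_def by auto
  interpret D2: dat \<rho> \<rho>' \<theta>' w w' R2
    by unfold_locales (use D1.d\<rho> dw D1.c\<rho>' D1.c\<theta>' cw' D1.pos D1.le1 D1.\<theta>nn supp2 in auto)
  have lt2: "\<rho> x < 2" for x using D1.le1[of x] by simp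
  have ueq: "u = (\<lambda>x. complex_of_real (\<rho> x) * cis (\<theta> x))" using F9 unfolding \<rho>_def .
  note M = master[where R=R2, OF D1.d\<rho> F8 dw D1.c\<rho>' D1.c\<theta>' cw' D1.pos lt2 supp2 ueq]
  have mom: "momentum u = q" using F10 unfolding Xqm_def by auto
  have inX: "(u, w) \<in> Xqm q m" unfolding Xqm_def using M(1) M(3) mw mom by simp
  have Emw: "Emin \<alpha> \<beta> q m \<le> ereal (energy \<alpha> \<beta> u w)"
    unfolding Emin_def using inX by (rule INF_lower2) simp
  have Eu: "energy \<alpha> \<beta> u v = (LINT x|lborel. gpint (\<rho> x) (\<rho>' x) (\<theta>' x)) + (LINT x|lborel. vint \<alpha> \<beta> (\<rho> x) (v x) (deriv v x))"
  proof -
    have "energy \<alpha> \<beta> u v = (LINT x|lborel. eint \<alpha> \<beta> (\<rho> x) (\<rho>' x) (\<theta>' x) (v x) (deriv v x))"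
      unfolding F7 \<rho>_def \<rho>'_def ..
    then show ?thesis using D1.e_split by simp
  qed
  have Ew: "energy \<alpha> \<beta> u w = (LINT x|lborel. gpint (\<rho> x) (\<rho>' x) (\<theta>' x)) + (LINT x|lborel. vint \<alpha> \<beta> (\<rho> x) (w x) (w' x))"
    using M(4)[of \<alpha> \<beta>] D2.e_split[of \<alpha> \<beta>] by simp
  have sA: "\<And>x. \<bar>x\<bar> \<le> s0^2 / (8 * K) \<Longrightarrow> s0 / 2 \<le> 1 - \<rho> x"
    using perA(2)[OF a b mem q m Ec c K S] unfolding \<rho>_def .
  have I2K: "(LINT x|lborel. (1 - (\<rho> x)^2)^2) \<le> 4 * K"
    using perA(3)[OF a b mem q m Ec c K S] unfolding \<rho>_def .
  have Kp: "0 < K" unfolding K using q a m by (simp add: add_pos_nonneg)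
  have Yp: "0 < sqrt 2 * q + \<alpha> * m" using q a m by (simp add: add_pos_nonneg)
  have s0p: "0 < s0" unfolding S using c Yp by simp
  have r0p: "0 \<le> r0" unfolding r0 using Kp by simp
  have gain: "(s0/2 * \<gamma>) * (r0 - (-r0)) \<le> (LINT x|lborel. (1 - (\<rho> x)^2) * (w x)^2)"
  proof (rule int_lower[OF D2.i_rv])
    show "0 \<le> (1 - (\<rho> x)^2) * (w x)^2" for x
      using D1.le1[of x] D1.pos[of x] by (simp add: power_le_one)
    show "s0/2 * \<gamma> \<le> (1 - (\<rho> x)^2) * (w x)^2" if "-r0 \<le> x" "x \<le> r0" for x
    proof -
      have ax: "\<bar>x\<bar> \<le> r0" using that by simp
      have "s0 / 2 \<le> 1 - \<rho> x" using sA ax unfolding r0 by blast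
      also have "1 - \<rho> x \<le> 1 - (\<rho> x)^2"
        using D1.le1[of x] D1.pos[of x] by (simp add: power2_eq_square mult_left_le)
      finally have h1: "s0 / 2 \<le> 1 - (\<rho> x)^2" .
      show ?thesis using h1 gw[OF ax] s0p gam by (intro mult_mono) auto
    qed
  qed (use r0p s0p gam in auto)
  have vw: "(LINT x|lborel. vint \<alpha> \<beta> (\<rho> x) (w x) (w' x)) \<le> - (\<kappa> * r0 * \<gamma>)"
  proof -
    have "(LINT x|lborel. vint \<alpha> \<beta> (\<rho> x) (w x) (w' x))
       = (1/2) * (LINT x|lborel. (w' x)^2) + (\<beta>/4) * (LINT x|lborel. (w x)^4) - (\<alpha>/2) * (LINT x|lborel. (1 - (\<rho> x)^2) * (w x)^2)"
      by (rule D2.vint_eq)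
    also have "\<dots> \<le> \<kappa> * r0 * \<gamma> - (\<alpha>/2) * ((s0/2 * \<gamma>) * (r0 - (-r0)))"
    proof -
      have "(\<alpha>/2) * ((s0/2 * \<gamma>) * (r0 - (-r0))) \<le> (\<alpha>/2) * (LINT x|lborel. (1 - (\<rho> x)^2) * (w x)^2)"
        by (rule mult_left_mono[OF gain]) (use a in simp)
      then show ?thesis using cw by linarith
    qed
    also have "\<dots> = - (\<kappa> * r0 * \<gamma>)" unfolding \<kappa> by (simp add: algebra_simps)
    finally show ?thesis .
  qed
  have vv: "- ((\<alpha>/4) * (4 * K * t + (LINT x|lborel. (v x)^4) / t)) \<le> (LINT x|lborel. vint \<alpha> \<beta> (\<rho> x) (v x) (deriv v x))"
  proof -
    have l5: "(LINT x|lborel. (1 - (\<rho> x)^2) * (v x)^2) \<le> (t * (LINT x|lborel. (1 - (\<rho> x)^2)^2) + (1/t) * (LINT x|lborel. (v x)^4)) / 2"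
      by (rule D1.L5[OF t])
    have "t * (LINT x|lborel. (1 - (\<rho> x)^2)^2) \<le> t * (4 * K)" using I2K t by (intro mult_left_mono) auto
    with l5 have l5': "(LINT x|lborel. (1 - (\<rho> x)^2) * (v x)^2) \<le> (4 * K * t + (LINT x|lborel. (v x)^4) / t) / 2"
      by (simp add: algebra_simps)
    have nn: "0 \<le> (1/2) * (LINT x|lborel. (deriv v x)^2) + (\<beta>/4) * (LINT x|lborel. (v x)^4)"
      using b by (simp add: zero_le_even_power)
    have "(\<alpha>/2) * (LINT x|lborel. (1 - (\<rho> x)^2) * (v x)^2) \<le> (\<alpha>/2) * ((4 * K * t + (LINT x|lborel. (v x)^4) / t) / 2)"
      using l5' a by (intro mult_left_mono) auto
    then show ?thesis using D1.vint_eq[of \<alpha> \<beta>] nn by (simp add: algebra_simps)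
  qed
  have "energy \<alpha> \<beta> u w \<le> energy \<alpha> \<beta> u v + (\<alpha>/4) * (4 * K * t + (LINT x|lborel. (v x)^4) / t) - \<kappa> * r0 * \<gamma>"
    using Eu Ew vw vv by linarith
  then show ?thesis using Emw by (meson ereal_less_eq(3) order_trans)
qed


theorem lemma4p5:
  fixes \<alpha> \<beta> q m :: real
    and u :: "nat \<Rightarrow> real \<Rightarrow> complex" and v :: "nat \<Rightarrow> real \<Rightarrow> real"
  assumes "\<alpha> > 0" and "\<beta> \<ge> 0" and "0 < q" and "q < pi / 2" and "m \<ge> 0"
    and "\<And>n. (u n, v n) \<in> X0qm q m"
    and "(\<lambda>n. ereal (energy \<alpha> \<beta> (u n) (v n))) \<longlonglongrightarrow> Emin \<alpha> \<beta> q m"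
  shows "\<exists>\<delta>>0. (\<forall>\<^sub>F n in sequentially. L2norm (deriv (\<lambda>x. cmod (u n x))) > \<delta>) \<and>
                (m > 0 \<longrightarrow> (\<forall>\<^sub>F n in sequentially. L4norm (v n) > \<delta>))"
proof -
  have a: "0 < \<alpha>" and b: "0 \<le> \<beta>" and q: "0 < q" and m: "0 \<le> m" using assms by auto
  have mem: "\<And>n. (u n, v n) \<in> X0qm q m" by fact
  have lim: "(\<lambda>n. ereal (energy \<alpha> \<beta> (u n) (v n))) \<longlonglongrightarrow> Emin \<alpha> \<beta> q m" by fact
  define Em where "Em = Emin \<alpha> \<beta> q m"
  define E where "E = (\<lambda>n. energy \<alpha> \<beta> (u n) (v n))"
  obtain us vs where inX: "(us, vs) \<in> Xqm q m" and Es: "energy \<alpha> \<beta> us vs < sqrt 2 * q"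
    using competitor1[OF q m less_imp_le[OF a] b] by blast
  define es where "es = energy \<alpha> \<beta> us vs"
  have Emle: "Em \<le> ereal es" unfolding Em_def Emin_def es_def
    by (rule INF_lower2[OF inX]) simp
  define c where "c = (es + sqrt 2 * q) / 2"
  have esc: "es < c" and cq: "c < sqrt 2 * q" using Es unfolding c_def es_def by (auto simp: mult.commute)
  have "ereal es < ereal c" using esc by simp
  with Emle have "Em < ereal c" by (rule order_le_less_trans)
  then have "eventually (\<lambda>n. ereal (E n) < ereal c) sequentially"
    using order_tendstoD(2)[OF lim[folded Em_def]] unfolding E_def by blast
  then have ev1: "eventually (\<lambda>n. E n < c) sequentially" by simp
  define K where "K = sqrt 2 * q + \<alpha> * m / 2"
  define s0 where "s0 = (sqrt 2 * q - c) / (sqrt 2 * q + \<alpha> * m)"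
  have Kp: "0 < K" unfolding K_def using q a m by (simp add: add_pos_nonneg)
  have Yp: "0 < sqrt 2 * q + \<alpha> * m" using q a m by (simp add: add_pos_nonneg)
  have s0p: "0 < s0" unfolding s0_def using cq Yp by simp
  define \<delta>1 where "\<delta>1 = sqrt (s0^4 / (16 * K))"
  have d1p: "0 < \<delta>1" unfolding \<delta>1_def using s0p Kp by simp
  have P1: "eventually (\<lambda>n. \<delta>1 < L2norm (deriv (\<lambda>x. cmod (u n x)))) sequentially"
    using ev1
  proof (rule eventually_mono)
    fix n assume "E n < c"
    then show "\<delta>1 < L2norm (deriv (\<lambda>x. cmod (u n x)))"
      unfolding \<delta>1_def using perA(1)[OF a b mem q m _ cq K_def s0_def] unfolding E_def by blast
  qed
  have P2: "\<exists>\<delta>2>0. eventually (\<lambda>n. \<delta>2 < L4norm (v n)) sequentially" if mpos: "0 < m"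
  proof -
    define r0 where "r0 = s0^2 / (8 * K)"
    define \<kappa> where "\<kappa> = \<alpha> * s0 / 4"
    have r0p: "0 < r0" unfolding r0_def using s0p Kp by simp
    have kp: "0 < \<kappa>" unfolding \<kappa>_def using s0p a by simp
    obtain w w' Rw \<gamma> where W1: "\<And>x. (w has_real_derivative w' x) (at x)" and W2: "continuous_on UNIV w'"
      and W3: "\<And>x. Rw < \<bar>x\<bar> \<Longrightarrow> w x = 0 \<and> w' x = 0"
      and W4: "(LINT x|lborel. (w x)^2) = m"
      and W5: "0 < \<gamma>" and W6: "\<And>x. \<bar>x\<bar> \<le> r0 \<Longrightarrow> \<gamma> \<le> (w x)^2"
      and W7: "(1/2) * (LINT x|lborel. (w' x)^2) + (\<beta>/4) * (LINT x|lborel. (w x)^4) \<le> \<kappa> * r0 * \<gamma>"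
      using competitor2[OF mpos b kp r0p] by blast
    define g where "g = \<kappa> * r0 * \<gamma>"
    have gp: "0 < g" unfolding g_def using kp r0p W5 by simp
    define t where "t = g / (4 * \<alpha> * K)"
    have tp: "0 < t" unfolding t_def using gp a Kp by simp
    define X where "X = g * t / \<alpha>"
    have Xp: "0 < X" unfolding X_def using gp tp a by simp
    define \<delta>2 where "\<delta>2 = X powr (1/4)"
    have d2p: "0 < \<delta>2" unfolding \<delta>2_def using Xp by simp
    have lb: "ereal (- (\<alpha>/2) * m) \<le> Em"
    proof (rule tendsto_lowerbound[OF lim[folded Em_def]])
      show "\<forall>\<^sub>F n in sequentially. ereal (- (\<alpha>/2) * m) \<le> ereal (energy \<alpha> \<beta> (u n) (v n))"
        using perC[OF less_imp_le[OF a] b mem] by simp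
    qed simp
    obtain e where Eme: "Em = ereal e"
      using lb Emle by (cases Em) auto
    have "Em < ereal (e + g/2)" using Eme gp by simp
    then have "eventually (\<lambda>n. ereal (E n) < ereal (e + g/2)) sequentially"
      using order_tendstoD(2)[OF lim[folded Em_def]] unfolding E_def by blast
    then have ev2: "eventually (\<lambda>n. E n < e + g/2) sequentially" by simp
    have "eventually (\<lambda>n. \<delta>2 < L4norm (v n)) sequentially"
      using ev1 ev2
    proof eventually_elim
      case (elim n)
      show "\<delta>2 < L4norm (v n)"
      proof (rule ccontr)
        assume "\<not> \<delta>2 < L4norm (v n)"
        then have L4le: "L4norm (v n) \<le> \<delta>2" by simp
        define V4 where "V4 = (LINT x|lborel. (v n x)^4)"
        have V4nn: "0 \<le> V4" unfolding V4_def by (simp add: zero_le_even_power)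
        have V4X: "V4 \<le> X"
        proof (rule ccontr)
          assume "\<not> V4 \<le> X"
          then have "X < V4" by simp
          then have "X powr (1/4) < V4 powr (1/4)" using Xp by (intro powr_less_mono2) auto
          then show False using L4le unfolding L4norm_def \<delta>2_def V4_def by simp
        qed
        have B: "Em \<le> ereal (E n + (\<alpha>/4) * (4 * K * t + V4 / t) - \<kappa> * r0 * \<gamma>)"
          unfolding Em_def E_def V4_def
          by (rule perB[OF a b mem q m _ cq K_def s0_def W1 W2 W3 W4 W5 W6 W7 r0_def \<kappa>_def tp])
             (use elim(1) in \<open>simp add: E_def\<close>)
        have t1: "(\<alpha>/4) * (4 * K * t) = g / 4" unfolding t_def using a Kp by (simp add: field_simps)
        have t2: "(\<alpha>/4) * (V4 / t) \<le> g / 4"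
        proof -
          have "V4 / t \<le> X / t" using V4X tp by (simp add: divide_right_mono)
          also have "X / t = g / \<alpha>" unfolding X_def using tp by simp
          finally have "(\<alpha>/4) * (V4 / t) \<le> (\<alpha>/4) * (g / \<alpha>)" using a by (intro mult_left_mono) auto
          also have "\<dots> = g / 4" using a by simp
          finally show ?thesis .
        qed
        from B have "e \<le> E n + (\<alpha>/4) * (4 * K * t + V4 / t) - g" unfolding Eme g_def by simp
        moreover have "(\<alpha>/4) * (4 * K * t + V4 / t) = (\<alpha>/4) * (4 * K * t) + (\<alpha>/4) * (V4 / t)"
          by (simp add: algebra_simps)
        ultimately show False using t1 t2 elim(2) gp by linarith
      qed
    qed
    then show ?thesis using d2p by blast
  qed
  show ?thesis
  proof (cases "0 < m")
    case True
    then obtain \<delta>2 where d2p: "0 < \<delta>2" and ev2: "eventually (\<lambda>n. \<delta>2 < L4norm (v n)) sequentially"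
      using P2 by blast
    show ?thesis
    proof (rule exI[of _ "min \<delta>1 \<delta>2"], intro conjI impI)
      show "0 < min \<delta>1 \<delta>2" using d1p d2p by simp
      show "\<forall>\<^sub>F n in sequentially. min \<delta>1 \<delta>2 < L2norm (deriv (\<lambda>x. cmod (u n x)))"
        using P1 by (rule eventually_mono) simp
      show "\<forall>\<^sub>F n in sequentially. min \<delta>1 \<delta>2 < L4norm (v n)"
        using ev2 by (rule eventually_mono) simp
    qed
  next
    case False
    then show ?thesis using P1 d1p by blast
  qed
qed


end
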